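(* Let $\mathcal{D}^*=(D,B,\mu)$ be the explicit blueprint described in the context. There exist $\delta_0>0$ and $C>0$ such that for every $\delta\in(0,\delta_0)$ there is a positive blueprint $\mathcal{D}^*_\delta=(D',B,\mu')$ such that: $\mathsf{Completeness}(\mathcal{D}^*_\delta)\ge\mathsf{Completeness}(\mathcal{D}^* )-C\delta$; $\mathsf{Soundness}(\mathcal{D}^*_\delta)\le\mathsf{Soundness}(\mathcal{D}^* )+C\delta$; every configuration $(b_i,b_j,b_{ij})$ in the support of $D'$ satisfies $-1+|b_i+b_j|<b_{ij}<1-|b_i-b_j|$; and $\mu'(b)\ge\delta$ for every $b\in B$.
   Context: $b_{GW}\in[-1,1)$ is the point where $\min_{b\in[-1,1)}\frac{\arccos(b)}{\pi}\cdot\frac{2}{1-b}$ is attained ($b_{GW}\approx-0.6891577$). $\Phi$ is the standard normal CDF; for $\rho\in[-1,1]$, $\Gamma_\rho(q_1,q_2)=\Pr[x\le\Phi^{-1}(q_1),\,y\le\Phi^{-1}(q_2)]$ for jointly Gaussian standard normals $x,y$ with correlation $\rho$. A configuration is $\theta=(b_i,b_j,b_{ij})\in[-1,1]^3$ with $-1+|b_i+b_j|\le b_{ij}\le1-|b_i-b_j|$; $\rho(\theta)=\frac{b_{ij}-b_ib_j}{\sqrt{(1-b_i^2)(1-b_j^2)}}$ (or $0$ if the denominator is $0$); $\theta$ is positive if $\rho(\theta)\le0$. A blueprint $\mathcal{D}=(D,B,\mu)$: $D$ a finitely supported distribution on configurations, $B$ the set of biases appearing in its support, $\mu$ a probability measure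 on $B$ with $\sum_b\mu(b)b=0$; positive if all configurations in the support are positive. $\mathsf{Completeness}(\mathcal{D})=\mathbb{E}_D\frac{1-b_{ij}}{2}$; for $t:B\to[-1,1]$, $\mathsf{Soundness}(\mathcal{D},t)=\mathbb{E}_{\theta\sim D}[\frac{1-t(b_i)}{2}+\frac{1-t(b_j)}{2}-2\Gamma_{\rho(\theta)}(\frac{1-t(b_i)}{2},\frac{1-t(b_j)}{2})]$, and $\mathsf{Soundness}(\mathcal{D})$ is its maximum over $t$ with $\sum_b\mu(b)t(b)=0$. The blueprint $\mathcal{D}^*$: let $b=1+b_{GW}$, $\nu_1=0.004$, $\nu_2=0.013$, and $b_1=-2b-\nu_2$, $b_2=-b-\nu_1$, $b_3=\nu_1$, $b_4=b-\nu_1$, $b_5=2b+\nu_1$; $B=\{b_1,\ldots,b_5\}$. $\mu(b_1)\approx0.325898600625$ and $\mu(b_4)\approx0.674101399375$ (exactly $\mu(b_1)=\frac{b_4}{b_4-b_1}$, $\mu(b_4)=\frac{-b_1}{b_4-b_1}$), $\mu(b_2)=\mu(b_3)=\mu(b_5)=0$. $D$ puts probability $0.351359472465$ on $(b_2,b_4,b_{GW})$, $0.273707303709$ on $(b_3,b_4,b_{GW})$, $0.271584315668$ on $(b_2,b_3,b_{GW})$, $0.064406822738$ on $(b_2,b_5,b_{GW})$, and $0.038942085420$ on $(b_1,b_5,b_{GW})$. *)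

theory Defs
  imports "HOL-Probability.Probability"
begin

definition gw_ratio :: "real \<Rightarrow> real" where
  "gw_ratio b = (arccos b / pi) * (2 / (1 - b))"

definition b_GW :: real where
  "b_GW = (SOME b. b \<in> {-1..<1} \<and> (\<forall>c\<in>{-1..<1}. gw_ratio b \<le> gw_ratio c))"

definition std_normal :: "real measure" where
  "std_normal = density lborel std_normal_density"

definition Phi :: "real \<Rightarrow> real" where
  "Phi x = measure std_normal {..x}"

(* Gamma_rho(q1,q2) = Pr[x <= Phi^-1(q1), y <= Phi^-1(q2)], x,y standard normals with
   correlation rho, realised as x = u, y = rho*u + sqrt(1-rho^2)*v with u,v iid N(0,1).
   The event x <= Phi^-1(q) is written Phi x <= q (equivalent for q in [0,1],
   with Phi^-1(0) = -infinity, Phi^-1(1) = +infinity). *)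
definition Gamma :: "real \<Rightarrow> real \<Rightarrow> real \<Rightarrow> real" where
  "Gamma \<rho> q1 q2 = measure (std_normal \<Otimes>\<^sub>M std_normal)
     {(u, v). Phi u \<le> q1 \<and> Phi (\<rho> * u + sqrt (1 - \<rho>\<^sup>2) * v) \<le> q2}"

type_synonym config = "real \<times> real \<times> real"

definition is_config :: "config \<Rightarrow> bool" where
  "is_config \<theta> = (case \<theta> of (ci, cj, cij) \<Rightarrow>
     ci \<in> {-1..1} \<and> cj \<in> {-1..1} \<and> cij \<in> {-1..1} \<and>
     -1 + \<bar>ci + cj\<bar> \<le> cij \<and> cij \<le> 1 - \<bar>ci - cj\<bar>)"

definition rho :: "config \<Rightarrow> real" where
  "rho \<theta> = (case \<theta> of (ci, cj, cij) \<Rightarrow>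
     (if sqrt ((1 - ci\<^sup>2) * (1 - cj\<^sup>2)) = 0 then 0
      else (cij - ci * cj) / sqrt ((1 - ci\<^sup>2) * (1 - cj\<^sup>2))))"

definition positive_config :: "config \<Rightarrow> bool" where
  "positive_config \<theta> = (rho \<theta> \<le> 0)"

definition biases :: "config pmf \<Rightarrow> real set" where
  "biases D = (\<Union>(ci, cj, cij)\<in>set_pmf D. {ci, cj})"

definition is_blueprint :: "config pmf \<Rightarrow> real set \<Rightarrow> real pmf \<Rightarrow> bool" where
  "is_blueprint D B \<mu> \<longleftrightarrow> finite (set_pmf D) \<and> (\<forall>\<theta>\<in>set_pmf D. is_config \<theta>) \<and>
     B = biases D \<and> set_pmf \<mu> \<subseteq> B \<and> (\<Sum>b\<in>B. pmf \<mu> b * b) = 0"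

definition positive_blueprint :: "config pmf \<Rightarrow> real set \<Rightarrow> real pmf \<Rightarrow> bool" where
  "positive_blueprint D B \<mu> \<longleftrightarrow> is_blueprint D B \<mu> \<and> (\<forall>\<theta>\<in>set_pmf D. positive_config \<theta>)"

definition completeness :: "config pmf \<Rightarrow> real" where
  "completeness D = measure_pmf.expectation D (\<lambda>(ci, cj, cij). (1 - cij) / 2)"

definition soundness_t :: "config pmf \<Rightarrow> (real \<Rightarrow> real) \<Rightarrow> real" where
  "soundness_t D t = measure_pmf.expectation D (\<lambda>\<theta>. case \<theta> of (ci, cj, cij) \<Rightarrow>
      (1 - t ci) / 2 + (1 - t cj) / 2 - 2 * Gamma (rho \<theta>) ((1 - t ci) / 2) ((1 - t cj) / 2))"

(* maximum over t : B -> [-1,1] with sum_b mu(b) t(b) = 0 (attained; written as Sup) *)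
definition soundness :: "config pmf \<Rightarrow> real set \<Rightarrow> real pmf \<Rightarrow> real" where
  "soundness D B \<mu> = Sup {soundness_t D t | t. (\<forall>b\<in>B. t b \<in> {-1..1}) \<and> (\<Sum>b\<in>B. pmf \<mu> b * t b) = 0}"

definition bb :: real where "bb = 1 + b_GW"
definition nu1 :: real where "nu1 = 0.004"
definition nu2 :: real where "nu2 = 0.013"
definition b1 :: real where "b1 = -2 * bb - nu2"
definition b2 :: real where "b2 = - bb - nu1"
definition b3 :: real where "b3 = nu1"
definition b4 :: real where "b4 = bb - nu1"
definition b5 :: real where "b5 = 2 * bb + nu1"

definition B_star :: "real set" where "B_star = {b1, b2, b3, b4, b5}"

definition mu_star :: "real pmf" where
  "mu_star = pmf_of_list [(b1, b4 / (b4 - b1)), (b4, - b1 / (b4 - b1))]"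

definition D_star :: "config pmf" where
  "D_star = pmf_of_list
     [((b2, b4, b_GW), 0.351359472465),
      ((b3, b4, b_GW), 0.273707303709),
      ((b2, b3, b_GW), 0.271584315668),
      ((b2, b5, b_GW), 0.064406822738),
      ((b1, b5, b_GW), 0.038942085420)]"

end

theory Submission
  imports Defs
begin


lemma cos_upper6: "cos (x::real) \<le> 1 - x^2/2 + x^4/24 + x^6/720"
proof -
  obtain t where t: "cos x = (\<Sum>m<6. cos_coeff m * x ^ m) + (cos (t + 1/2 * real 6 * pi) / fact 6) * x ^ 6"
    using Maclaurin_cos_expansion[of x 6] by blast
  have s: "(\<Sum>m<6. cos_coeff m * x ^ m) = 1 - x^2/2 + x^4/24"
  proof -
    have e: "(\<Sum>m<6. cos_coeff m * x ^ m) = cos_coeff 0 * x^0 + cos_coeff 1 * x^1 + cos_coeff 2 * x^2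
       + cos_coeff 3 * x^3 + cos_coeff 4 * x^4 + cos_coeff 5 * x^5"
      by (simp add: eval_nat_numeral)
    have "cos_coeff 0 = 1" "cos_coeff 1 = 0" "cos_coeff 2 = -1/2" "cos_coeff 3 = 0"
      "cos_coeff 4 = 1/24" "cos_coeff 5 = 0"
      by (simp_all add: cos_coeff_def fact_numeral)
    then show ?thesis using e by simp
  qed
  have "cos (t + 1/2 * real 6 * pi) / fact 6 * x ^ 6 \<le> 1 / fact 6 * x^6"
    by (intro mult_right_mono divide_right_mono) (auto intro: zero_le_even_power)
  then show ?thesis using t s by (simp add: fact_numeral)
qed

lemma cos_lower2: "1 - (x::real)^2/2 \<le> cos x"
proof -
  have "cos x = cos (2 * (x/2))" by simp
  also have "\<dots> = 1 - 2 * sin (x/2) ^ 2" by (rule cos_double_sin)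
  finally have c: "cos x = 1 - 2 * sin (x/2) ^ 2" .
  have "\<bar>sin (x/2)\<bar> \<le> \<bar>x/2\<bar>" by (rule abs_sin_x_le_abs_x)
  hence "sin (x/2) ^ 2 \<le> (x/2)^2"
    by (metis abs_le_square_iff)
  then show ?thesis using c by (simp add: power_divide)
qed

lemma ratio_helper:
  fixes P D A k :: real
  assumes "0 < P" "0 < D" "k * P * D / 2 < A"
  shows "k < A / P * (2 / D)"
proof -
  have e: "A / P * (2 / D) = (2 * A) / (P * D)" by simp
  have "k * (P * D) < 2 * A" using assms(3) by (simp add: mult.assoc)
  then show ?thesis unfolding e using assms by (simp add: pos_less_divide_eq)
qed

lemma gw_A:
  assumes "-1 \<le> b" "b \<le> -0.99"
  shows "gw_ratio b > 0.879"
proof -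
  have pi3: "pi > 3" by (rule pi_gt3)
  have c15: "cos 0.15 \<le> (0.99::real)" using cos_upper6[of "0.15"] by (simp add: power_divide)
  have "arccos 0.99 \<le> arccos (cos 0.15)"
    by (rule arccos_le_arccos) (use c15 in auto)
  also have "\<dots> = 0.15" using pi3 by (intro arccos_cos) auto
  finally have a1: "arccos 0.99 \<le> 0.15" .
  have "arccos (-0.99) \<le> arccos b" by (rule arccos_le_arccos) (use assms in auto)
  moreover have "arccos (-0.99) = pi - arccos 0.99" using arccos_minus[of "0.99"] by simp
  ultimately have ab: "arccos b \<ge> pi - 0.15" using a1 by linarith
  have q: "2 / (1 - b) \<ge> 1" using assms by (simp add: field_simps)
  have "arccos b / pi > 0.879" using ab pi3 by (simp add: field_simps)
  moreover have "arccos b / pi * (2 / (1 - b)) \<ge> arccos b / pi * 1"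
    using q ab pi3 by (intro mult_left_mono) auto
  ultimately have "arccos b / pi * (2 / (1 - b)) > 0.879" by linarith
  then show ?thesis by (simp add: gw_ratio_def)
qed

lemma gw_B:
  assumes "-0.62 \<le> b" "b \<le> 0"
  shows "gw_ratio b > 0.879"
proof -
  have pia: "3.141592653588 \<le> pi" "pi \<le> 3.1415926535899" by (rule pi_approx)+
  define g where "g x = arccos x - 0.879 * pi * (1 - x) / 2" for x
  define x0 where "x0 = 0.28801 * pi"
  have x0L: "x0 \<ge> 0.9048" using pia by (simp add: x0_def)
  have x0U: "x0 \<le> 0.9049" using pia by (simp add: x0_def)
  have x0pos: "x0 \<ge> 0" using x0L by simp
  have h2: "x0^2 \<ge> 0.9048^2" using x0L by (intro power_mono) auto
  have h4: "x0^4 \<le> 0.9049^4" using x0U x0pos by (intro power_mono) auto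
  have h6: "x0^6 \<le> 0.9049^6" using x0U x0pos by (intro power_mono) auto
  have "cos x0 \<le> 1 - x0^2/2 + x0^4/24 + x0^6/720" by (rule cos_upper6)
  also have "\<dots> \<le> 1 - 0.9048^2/2 + 0.9049^4/24 + 0.9049^6/720" using h2 h4 h6 by linarith
  also have "\<dots> < 0.62" by (simp add: power_divide)
  finally have cx0: "cos x0 < 0.62" .
  have "arccos 0.62 < arccos (cos x0)"
    by (rule arccos_less_arccos) (use cx0 in auto)
  also have "\<dots> = x0" using x0pos by (intro arccos_cos) (auto simp: x0_def)
  finally have a62: "arccos 0.62 < x0" .
  have "arccos (-0.62) = pi - arccos 0.62" using arccos_minus[of "0.62"] by simp
  hence gm: "g (-0.62) > 0" using a62 by (simp add: g_def x0_def algebra_simps)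
  have "g b > 0"
  proof (cases "b = -0.62")
    case True then show ?thesis using gm by simp
  next
    case False
    hence lt: "-0.62 < b" using assms by simp
    have "g (-0.62) < g b"
    proof (rule DERIV_pos_imp_increasing[OF lt])
      fix x :: real assume x: "-0.62 \<le> x" "x \<le> b"
      have x1: "-1 < x" "x < 1" using x assms by auto
      have dg: "DERIV g x :> inverse (- sqrt (1 - x\<^sup>2)) - 0.879 * pi * (- 1) / 2"
        unfolding g_def
        by (rule derivative_eq_intros DERIV_arccos[OF x1] | simp)+
      have xx: "x^2 \<le> 0.3844"
      proof -
        have "x^2 = (-x)*(-x)" by (simp add: power2_eq_square)
        also have "\<dots> \<le> 0.62 * 0.62" using x assms by (intro mult_mono) auto
        finally show ?thesis by simp
      qed
      have s78: "0.78 \<le> sqrt (1 - x\<^sup>2)" using xx by (intro real_le_rsqrt) (simp add: power2_eq_square)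
      have "0.879 * pi / 2 * sqrt (1 - x\<^sup>2) > 1"
      proof -
        have "0.879 * pi / 2 * sqrt (1 - x\<^sup>2) \<ge> 0.879 * 3.141592653588 / 2 * 0.78"
          using pia s78 by (intro mult_mono) auto
        then show ?thesis by simp
      qed
      moreover have sp: "sqrt (1 - x\<^sup>2) > 0" by (rule order_less_le_trans[OF _ s78]) simp
      ultimately have "1 / sqrt (1 - x\<^sup>2) < 0.879 * pi / 2"
        by (simp add: pos_divide_less_eq)
      moreover have "inverse (- sqrt (1 - x\<^sup>2)) = - (1 / sqrt (1 - x\<^sup>2))"
        by (simp add: inverse_eq_divide)
      ultimately have "inverse (- sqrt (1 - x\<^sup>2)) - 0.879 * pi * (- 1) / 2 > 0"
        by simp
      then show "\<exists>y. DERIV g x :> y \<and> y > 0" using dg by blast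
    qed
    then show ?thesis using gm by simp
  qed
  hence A: "0.879 * pi * (1 - b) / 2 < arccos b" by (simp add: g_def)
  have D: "0 < 1 - b" using assms by simp
  show ?thesis unfolding gw_ratio_def by (rule ratio_helper[OF pi_gt_zero D A])
qed

lemma gw_C:
  assumes "0 \<le> b" "b < 1"
  shows "gw_ratio b > 0.879"
proof -
  have pia: "3.141592653588 \<le> pi" "pi \<le> 3.1415926535899" by (rule pi_approx)+
  define x where "x = arccos b"
  have bb1: "-1 \<le> b" "b \<le> 1" using assms by linarith+
  have xb1: "cos x = b" unfolding x_def by (rule cos_arccos[OF bb1])
  have xb2: "0 \<le> x" unfolding x_def by (rule arccos_lbound[OF bb1])
  have "1 - x^2/2 \<le> cos x" by (rule cos_lower2)
  hence c1: "1 - x^2/2 \<le> b" unfolding xb1 .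
  have D: "0 < 1 - b" using assms by linarith
  have "(1-b)*(1-b) \<le> (1-b)*1" using assms by (intro mult_left_mono) linarith+
  hence h1: "2 * ((1-b)*(1-b)) \<le> 2 * (1-b)" by simp
  have h2: "2 * (1-b) \<le> x * x" using c1 unfolding power2_eq_square by (simp add: field_simps)
  have x2: "x^2 \<ge> 2 * (1-b)^2" using order_trans[OF h1 h2] unfolding power2_eq_square .
  have k0: "(0.879 * pi)^2 \<le> (0.879 * 3.1415926535899)^2" using pia by (intro power_mono) auto
  have k1: "(0.879 * 3.1415926535899 :: real)^2 < 8" by (simp add: power_divide)
  have k: "(0.879 * pi)^2 < 8" using k0 k1 by (rule le_less_trans)
  have p: "0 < (1-b)^2" using D by simp
  have "(0.879 * pi * (1 - b))^2 = (0.879 * pi)^2 * (1-b)^2" by (rule power_mult_distrib)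
  also have "\<dots> < 8 * (1-b)^2" using k p by (rule mult_strict_right_mono)
  also have "\<dots> \<le> (2 * x)^2" using x2 unfolding power_mult_distrib by simp
  finally have lt: "(0.879 * pi * (1 - b))^2 < (2 * x)^2" .
  have "0.879 * pi * (1 - b) < 2 * x"
    by (rule power2_less_imp_less[OF lt]) (use xb2 in simp)
  hence A: "0.879 * pi * (1 - b) / 2 < arccos b" unfolding x_def by simp
  show ?thesis unfolding gw_ratio_def by (rule ratio_helper[OF pi_gt_zero D A])
qed

lemma gw_D: "gw_ratio (- (sqrt 2 / 2)) < 0.879"
proof -
  have s0: "0 \<le> sqrt 2" by simp
  have s2: "sqrt 2 < 2" by (rule sqrt2_less_2)
  have "arccos (cos (pi/4)) = pi/4" by (rule arccos_cos) auto
  hence h: "arccos (sqrt 2 / 2) = pi/4" by (simp only: cos_45)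
  have "arccos (- (sqrt 2 / 2)) = pi - arccos (sqrt 2 / 2)"
    by (rule arccos_minus) (use s0 s2 in linarith)+
  hence a: "arccos (- (sqrt 2 / 2)) = 3 / 4 * pi" using h by simp
  have s: "sqrt 2 \<ge> 1.414" by (rule real_le_rsqrt) (simp add: power_divide)
  have e: "gw_ratio (- (sqrt 2 / 2)) = 3 / 4 * (2 / (1 + sqrt 2 / 2))"
    unfolding gw_ratio_def a by simp
  have D: "1 + sqrt 2 / 2 \<ge> 1.707" using s by simp
  have "2 / (1 + sqrt 2 / 2) < 0.879 * 4 / 3"
    using D by (subst pos_divide_less_eq) auto
  hence "3/4 * (2 / (1 + sqrt 2 / 2)) < 3/4 * (0.879 * 4 / 3)" by (rule mult_strict_left_mono) simp
  then show ?thesis unfolding e by simp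
qed

lemma bGW_bounds: "-0.99 < b_GW \<and> b_GW < -0.62"
proof -
  have c1: "continuous_on {-1..0} (\<lambda>b::real. arccos b)"
    by (rule continuous_on_subset[OF continuous_on_arccos']) auto
  have c2: "continuous_on {-1..0} (\<lambda>b::real. 2 / (1 - b))"
    by (intro continuous_intros) auto
  have cont: "continuous_on {-1..0} gw_ratio"
    unfolding gw_ratio_def
    by (rule continuous_on_mult[OF continuous_on_divide[OF c1 continuous_on_const] c2]) simp
  have ne: "{-1..0::real} \<noteq> {}" by simp
  obtain bm where bm: "bm \<in> {-1..0}" "\<And>y. y \<in> {-1..0} \<Longrightarrow> gw_ratio bm \<le> gw_ratio y"
    using continuous_attains_inf[OF compact_Icc ne cont] by blast
  have s2: "sqrt 2 / 2 \<le> 1" using sqrt2_less_2 by simp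
  have m: "- (sqrt 2 / 2) \<in> {-1..0}" using s2 by simp
  have d: "gw_ratio bm < 0.879"
    using bm(2)[OF m] gw_D by (rule le_less_trans)
  have ex: "\<exists>b. b \<in> {-1..<1} \<and> (\<forall>c\<in>{-1..<1}. gw_ratio b \<le> gw_ratio c)"
  proof (intro exI[of _ bm] conjI ballI)
    show "bm \<in> {-1..<1}" using bm by auto
    fix c :: real assume c: "c \<in> {-1..<1}"
    show "gw_ratio bm \<le> gw_ratio c"
    proof (cases "c \<le> 0")
      case True then show ?thesis using bm c by simp
    next
      case False
      hence "gw_ratio c > 0.879" using gw_C[of c] c by simp
      then show ?thesis using d by (meson less_imp_le less_trans)
    qed
  qed
  have bg: "b_GW \<in> {-1..<1}" "\<And>c. c \<in> {-1..<1} \<Longrightarrow> gw_ratio b_GW \<le> gw_ratio c"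
    using someI_ex[OF ex] unfolding b_GW_def by auto
  have bm1: "bm \<in> {-1..<1}" using bm(1) by simp
  have lt: "gw_ratio b_GW < 0.879" using bg(2)[OF bm1] d by (rule le_less_trans)
  show ?thesis
  proof (rule ccontr)
    assume "\<not> ?thesis"
    hence "b_GW \<le> -0.99 \<or> (-0.62 \<le> b_GW \<and> b_GW \<le> 0) \<or> 0 \<le> b_GW" by auto
    hence "gw_ratio b_GW > 0.879"
    proof (elim disjE)
      assume "b_GW \<le> -0.99" then show ?thesis using gw_A[of b_GW] bg(1) by auto
    next
      assume "-0.62 \<le> b_GW \<and> b_GW \<le> 0" then show ?thesis using gw_B[of b_GW] by auto
    next
      assume "0 \<le> b_GW" then show ?thesis using gw_C[of b_GW] bg(1) by auto
    qed
    then show False using lt by (meson order.asym)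
  qed
qed



lemma bb_bounds: "0.01 < bb" "bb < 0.38"
  using bGW_bounds by (simp_all add: bb_def)

lemma bGW_eq: "b_GW = bb - 1" by (simp add: bb_def)

lemma bb_bounds': "1/100 < bb" "bb < 38/100"
  using bb_bounds by simp_all

lemma bb_sq: "bb * bb \<le> (38/100) * bb" "0 \<le> bb * bb"
  using bb_bounds' by (intro mult_right_mono; simp) simp

lemma b_eqs: "b1 = -2 * bb - 0.013" "b2 = - bb - 0.004" "b3 = 0.004" "b4 = bb - 0.004"
  "b5 = 2 * bb + 0.004"
  by (simp_all add: b1_def b2_def b3_def b4_def b5_def nu1_def nu2_def)

lemma b_order: "b1 < b2" "b2 < b3" "b3 < b4" "b4 < b5" "-1 < b1" "b5 < 1"
  using bb_bounds by (simp_all add: b_eqs)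

lemma b_abs: "\<bar>b1\<bar> < 1" "\<bar>b2\<bar> < 1" "\<bar>b3\<bar> < 1" "\<bar>b4\<bar> < 1" "\<bar>b5\<bar> < 1"
  using b_order by auto

lemma b_distinct[simp]: "b1 \<noteq> b2" "b1 \<noteq> b3" "b1 \<noteq> b4" "b1 \<noteq> b5" "b2 \<noteq> b3" "b2 \<noteq> b4"
  "b2 \<noteq> b5" "b3 \<noteq> b4" "b3 \<noteq> b5" "b4 \<noteq> b5"
  "b2 \<noteq> b1" "b3 \<noteq> b1" "b4 \<noteq> b1" "b5 \<noteq> b1" "b3 \<noteq> b2" "b4 \<noteq> b2"
  "b5 \<noteq> b2" "b4 \<noteq> b3" "b5 \<noteq> b3" "b5 \<noteq> b4"
  using b_order by auto

definition goodc :: "config \<Rightarrow> bool" where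
  "goodc \<theta> = (case \<theta> of (ci, cj, cij) \<Rightarrow> \<bar>ci\<bar> < 1 \<and> \<bar>cj\<bar> < 1 \<and> -1 + \<bar>ci + cj\<bar> \<le> cij \<and>
      cij < 1 - \<bar>ci - cj\<bar> \<and> cij < ci * cj)"

lemma good1: "goodc (b2, b4, b_GW)"
proof -
  have "b_GW < b2 * b4"
  proof -
    have "b2 * b4 = - (bb * bb) + 16/1000000" by (simp add: b_eqs algebra_simps)
    then show ?thesis using bb_sq bb_bounds' bGW_eq by linarith
  qed
  moreover have "-1 + \<bar>b2 + b4\<bar> \<le> b_GW" "b_GW < 1 - \<bar>b2 - b4\<bar>"
    using bb_bounds by (simp_all add: b_eqs bGW_eq)
  ultimately show ?thesis using b_abs by (simp add: goodc_def)
qed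

lemma good2: "goodc (b3, b4, b_GW)"
proof -
  have "b_GW < b3 * b4" using bb_bounds by (simp add: b_eqs bGW_eq algebra_simps)
  moreover have "-1 + \<bar>b3 + b4\<bar> \<le> b_GW" "b_GW < 1 - \<bar>b3 - b4\<bar>"
    using bb_bounds by (simp_all add: b_eqs bGW_eq)
  ultimately show ?thesis using b_abs by (simp add: goodc_def)
qed

lemma good3: "goodc (b2, b3, b_GW)"
proof -
  have "b_GW < b2 * b3" using bb_bounds by (simp add: b_eqs bGW_eq algebra_simps)
  moreover have "-1 + \<bar>b2 + b3\<bar> \<le> b_GW" "b_GW < 1 - \<bar>b2 - b3\<bar>"
    using bb_bounds by (simp_all add: b_eqs bGW_eq)
  ultimately show ?thesis using b_abs by (simp add: goodc_def)
qed

lemma good4: "goodc (b2, b5, b_GW)"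
proof -
  have "b_GW < b2 * b5"
  proof -
    have e: "b2 * b5 = - (2 * (bb * bb)) - (12/1000) * bb - 16/1000000" by (simp add: b_eqs algebra_simps)
    have h: "2 * (bb * bb) \<le> (76/100) * bb" using bb_sq(1) by linarith
    have "bb - 1 < - (2 * (bb * bb)) - (12/1000) * bb - 16/1000000" using h bb_bounds' by linarith
    then show ?thesis unfolding e bGW_eq .
  qed
  moreover have "-1 + \<bar>b2 + b5\<bar> \<le> b_GW" "b_GW < 1 - \<bar>b2 - b5\<bar>"
    using bb_bounds by (simp_all add: b_eqs bGW_eq)
  ultimately show ?thesis using b_abs by (simp add: goodc_def)
qed

lemma good5: "goodc (b1, b5, b_GW)"
proof -
  have "b_GW < b1 * b5"
  proof -
    have "b1 * b5 = - (4 * (bb * bb)) - (34/1000) * bb - 52/1000000" by (simp add: b_eqs algebra_simps)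
    then show ?thesis using bb_sq bb_bounds' bGW_eq by linarith
  qed
  moreover have "-1 + \<bar>b1 + b5\<bar> \<le> b_GW" "b_GW < 1 - \<bar>b1 - b5\<bar>"
    using bb_bounds by (simp_all add: b_eqs bGW_eq)
  ultimately show ?thesis using b_abs by (simp add: goodc_def)
qed

lemma Dstar_wf: "pmf_of_list_wf
     [((b2, b4, b_GW), 0.351359472465::real),
      ((b3, b4, b_GW), 0.273707303709),
      ((b2, b3, b_GW), 0.271584315668),
      ((b2, b5, b_GW), 0.064406822738),
      ((b1, b5, b_GW), 0.038942085420)]"
  by (simp add: pmf_of_list_wf_def)

lemma Dstar_set: "set_pmf D_star = {(b2, b4, b_GW), (b3, b4, b_GW), (b2, b3, b_GW), (b2, b5, b_GW), (b1, b5, b_GW)}"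
  unfolding D_star_def by (subst set_pmf_of_list_eq[OF Dstar_wf]) auto

lemma Dstar_good: "\<theta> \<in> set_pmf D_star \<Longrightarrow> goodc \<theta>"
  using good1 good2 good3 good4 good5 by (auto simp: Dstar_set)

lemma Dstar_biases: "\<theta> \<in> set_pmf D_star \<Longrightarrow> fst \<theta> \<in> B_star \<and> fst (snd \<theta>) \<in> B_star"
  by (auto simp: Dstar_set B_star_def)

lemma Dstar_finite: "finite (set_pmf D_star)"
  by (simp add: Dstar_set)

lemma biases_Dstar: "biases D_star = B_star"
  by (auto simp: biases_def Dstar_set B_star_def)

definition mu1 :: real where "mu1 = b4 / (b4 - b1)"
definition mu4 :: real where "mu4 = - b1 / (b4 - b1)"
definition kap :: real where "kap = (b2 + b3 + b5) / (b4 - b1)"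

lemma b41: "b4 - b1 = 3 * bb + 0.009" by (simp add: b_eqs)

lemma mu_facts: "mu1 + mu4 = 1" "mu1 * b1 + mu4 * b4 = 0" "0.15 \<le> mu1" "0.6 \<le> mu4"
  "0 \<le> kap" "kap \<le> 1/2" "kap * (b4 - b1) = b2 + b3 + b5"
proof -
  have p: "0 < b4 - b1" using b_order by simp
  have "mu1 + mu4 = (b4 + - b1) / (b4 - b1)" unfolding mu1_def mu4_def by (rule add_divide_distrib[symmetric])
  then show "mu1 + mu4 = 1" using p by simp
  have "mu1 * b1 + mu4 * b4 = (b4 * b1 + - b1 * b4) / (b4 - b1)" unfolding mu1_def mu4_def
    by (simp add: add_divide_distrib)
  then show "mu1 * b1 + mu4 * b4 = 0" by simp
  show "0.15 \<le> mu1" using p bb_bounds unfolding mu1_def by (simp add: le_divide_eq b41 b_eqs)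
  show "0.6 \<le> mu4" using p bb_bounds unfolding mu4_def by (simp add: le_divide_eq b41 b_eqs)
  show "0 \<le> kap" using p bb_bounds unfolding kap_def by (simp add: b_eqs)
  show "kap \<le> 1/2" using p bb_bounds unfolding kap_def by (simp add: divide_le_eq b41 b_eqs)
  show "kap * (b4 - b1) = b2 + b3 + b5" using p by (simp add: kap_def)
qed

lemma mu_star_wf: "pmf_of_list_wf [(b1, b4 / (b4 - b1)), (b4, - b1 / (b4 - b1))]"
  unfolding pmf_of_list_wf_def mu1_def[symmetric] mu4_def[symmetric] using mu_facts by simp

lemma mu_star_eq: "mu_star = pmf_of_list [(b1, mu1), (b4, mu4)]"
  unfolding mu_star_def mu1_def mu4_def ..

lemma mu_star_wf': "pmf_of_list_wf [(b1, mu1), (b4, mu4)]"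
  unfolding pmf_of_list_wf_def using mu_facts by simp

lemma pmf_mu_star: "pmf mu_star b1 = mu1" "pmf mu_star b4 = mu4"
  "pmf mu_star b2 = 0" "pmf mu_star b3 = 0" "pmf mu_star b5 = 0"
  by (simp_all add: mu_star_eq pmf_pmf_of_list[OF mu_star_wf'])

lemma sum_B_star: "(\<Sum>b\<in>B_star. f b) = f b1 + f b2 + f b3 + f b4 + f b5"
  by (simp add: B_star_def add.assoc)

lemma sum_mu_star: "(\<Sum>b\<in>B_star. pmf mu_star b * t b) = mu1 * t b1 + mu4 * t b4"
  by (simp add: sum_B_star pmf_mu_star)

definition p1 :: "real \<Rightarrow> real" where "p1 \<delta> = (1 - 3 * \<delta>) * mu1 + \<delta> * kap"
definition p4 :: "real \<Rightarrow> real" where "p4 \<delta> = (1 - 3 * \<delta>) * mu4 - \<delta> * kap"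

definition mup :: "real \<Rightarrow> real pmf" where
  "mup \<delta> = pmf_of_list [(b1, p1 \<delta>), (b2, \<delta>), (b3, \<delta>), (b4, p4 \<delta>), (b5, \<delta>)]"

lemma p_facts:
  assumes d: "0 < \<delta>" "\<delta> < 0.01"
  shows "\<delta> \<le> p1 \<delta>" "\<delta> \<le> p4 \<delta>" "p1 \<delta> + p4 \<delta> + 3 * \<delta> = 1"
    "p1 \<delta> * b1 + p4 \<delta> * b4 + \<delta> * (b2 + b3 + b5) = 0"
proof -
  have m: "mu1 + mu4 = 1" "mu1 * b1 + mu4 * b4 = 0" "0.15 \<le> mu1" "0.6 \<le> mu4"
    "0 \<le> kap" "kap \<le> 1/2" "kap * (b4 - b1) = b2 + b3 + b5" by (rule mu_facts)+
  have "0.97 * 0.15 \<le> (1 - 3 * \<delta>) * mu1" using d m by (intro mult_mono) auto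
  moreover have "0 \<le> \<delta> * kap" using d m by simp
  ultimately show "\<delta> \<le> p1 \<delta>" using d by (simp add: p1_def)
  have "0.97 * 0.6 \<le> (1 - 3 * \<delta>) * mu4" using d m by (intro mult_mono) auto
  moreover have "\<delta> * kap \<le> 0.01 * 1" using d m by (intro mult_mono) auto
  ultimately show "\<delta> \<le> p4 \<delta>" using d by (simp add: p4_def)
  have "p1 \<delta> + p4 \<delta> + 3 * \<delta> = (1 - 3 * \<delta>) * (mu1 + mu4) + 3 * \<delta>"
    by (simp add: p1_def p4_def algebra_simps)
  then show "p1 \<delta> + p4 \<delta> + 3 * \<delta> = 1" using m(1) by simp
  have "p1 \<delta> * b1 + p4 \<delta> * b4 = (1 - 3 * \<delta>) * (mu1 * b1 + mu4 * b4) - \<delta> * (kap * (b4 - b1))"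
    by (simp add: p1_def p4_def algebra_simps)
  then show "p1 \<delta> * b1 + p4 \<delta> * b4 + \<delta> * (b2 + b3 + b5) = 0" using m(2,7) by simp
qed

lemma mup_wf:
  assumes d: "0 < \<delta>" "\<delta> < 0.01"
  shows "pmf_of_list_wf [(b1, p1 \<delta>), (b2, \<delta>), (b3, \<delta>), (b4, p4 \<delta>), (b5, \<delta>)]"
  using p_facts[OF d] d unfolding pmf_of_list_wf_def by auto

lemma pmf_mup:
  assumes d: "0 < \<delta>" "\<delta> < 0.01"
  shows "pmf (mup \<delta>) b1 = p1 \<delta>" "pmf (mup \<delta>) b2 = \<delta>" "pmf (mup \<delta>) b3 = \<delta>"
    "pmf (mup \<delta>) b4 = p4 \<delta>" "pmf (mup \<delta>) b5 = \<delta>"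
  unfolding mup_def by (simp_all add: pmf_pmf_of_list[OF mup_wf[OF d]])

lemma set_mup:
  assumes d: "0 < \<delta>" "\<delta> < 0.01"
  shows "set_pmf (mup \<delta>) \<subseteq> B_star"
  using set_pmf_of_list[OF mup_wf[OF d]] unfolding mup_def B_star_def by auto

lemma sum_mup:
  assumes d: "0 < \<delta>" "\<delta> < 0.01"
  shows "(\<Sum>b\<in>B_star. pmf (mup \<delta>) b * t b) = p1 \<delta> * t b1 + \<delta> * t b2 + \<delta> * t b3 + p4 \<delta> * t b4 + \<delta> * t b5"
  by (simp add: sum_B_star pmf_mup[OF d])

lemma a_bound:
  assumes d: "0 < \<delta>" "\<delta> < 0.01" and t: "\<forall>b\<in>B_star. t b \<in> {-1..1}"
    and c: "(\<Sum>b\<in>B_star. pmf (mup \<delta>) b * t b) = 0"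
  shows "\<bar>mu1 * t b1 + mu4 * t b4\<bar> \<le> 7 * \<delta>"
proof -
  have m: "mu1 + mu4 = 1" "0.15 \<le> mu1" "0.6 \<le> mu4" "0 \<le> kap" "kap \<le> 1/2"
    using mu_facts by auto
  have tb: "\<bar>t b1\<bar> \<le> 1" "\<bar>t b2\<bar> \<le> 1" "\<bar>t b3\<bar> \<le> 1" "\<bar>t b4\<bar> \<le> 1" "\<bar>t b5\<bar> \<le> 1"
    using t by (auto simp: B_star_def)
  define a where "a = mu1 * t b1 + mu4 * t b4"
  have c': "p1 \<delta> * t b1 + \<delta> * t b2 + \<delta> * t b3 + p4 \<delta> * t b4 + \<delta> * t b5 = 0"
    using c sum_mup[OF d, of t] by simp
  have id: "(1 - 3 * \<delta>) * a = - (\<delta> * (t b2 + t b3 + t b5) + \<delta> * (kap * (t b1 - t b4)))"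
    using c' by (simp add: a_def p1_def p4_def algebra_simps)
  have x1: "\<bar>t b2 + t b3 + t b5\<bar> \<le> 3" using tb by linarith
  have x2: "\<bar>kap * (t b1 - t b4)\<bar> \<le> 1/2 * 2"
    unfolding abs_mult using m tb by (intro mult_mono) auto
  have ad: "\<bar>\<delta>\<bar> = \<delta>" using d by simp
  have "\<bar>\<delta> * (t b2 + t b3 + t b5)\<bar> \<le> \<delta> * 3" unfolding abs_mult ad using d x1 by (intro mult_left_mono) auto
  moreover have "\<bar>\<delta> * (kap * (t b1 - t b4))\<bar> \<le> \<delta> * 1" unfolding abs_mult ad using d x2 by (intro mult_left_mono) auto
  ultimately have y: "\<bar>(1 - 3 * \<delta>) * a\<bar> \<le> 4 * \<delta>" unfolding id by linarith
  have a1: "\<bar>a\<bar> \<le> 1"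
  proof -
    have "\<bar>a\<bar> \<le> \<bar>mu1 * t b1\<bar> + \<bar>mu4 * t b4\<bar>" unfolding a_def by (rule abs_triangle_ineq)
    also have "\<bar>mu1 * t b1\<bar> \<le> mu1 * 1" unfolding abs_mult using m tb by (intro mult_mono) auto
    also have "\<bar>mu4 * t b4\<bar> \<le> mu4 * 1" unfolding abs_mult using m tb by (intro mult_mono) auto
    finally show ?thesis using m by linarith
  qed
  have "\<bar>3 * \<delta> * a\<bar> = 3 * \<delta> * \<bar>a\<bar>" using d by (simp add: abs_mult)
  also have "\<dots> \<le> 3 * \<delta> * 1" using d a1 by (intro mult_left_mono) auto
  finally have "\<bar>3 * \<delta> * a\<bar> \<le> 3 * \<delta> * 1" .
  moreover have "a = (1 - 3 * \<delta>) * a + 3 * \<delta> * a" by (simp add: algebra_simps)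
  ultimately have "\<bar>a\<bar> \<le> 4 * \<delta> + 3 * \<delta>" using y by (smt (verit))
  then show ?thesis by (simp add: a_def)
qed



lemma N_real_dist: "real_distribution std_normal"
  unfolding std_normal_def by (rule real_dist_normal_dist)

lemma N_prob: "prob_space std_normal"
  using N_real_dist unfolding real_distribution_def by simp

lemma sets_N[measurable_cong, simp]: "sets std_normal = sets borel"
  unfolding std_normal_def by simp

lemma space_N[simp]: "space std_normal = UNIV"
  unfolding std_normal_def by simp


lemma Phi_cdf: "Phi = cdf std_normal"
  by (rule ext) (simp add: Phi_def cdf_def)

lemma N_single: "measure std_normal {x} = 0"
proof -
  have n: "{x} \<in> null_sets lborel" by (rule countable_imp_null_set_lborel) simp
  have "AE y in lborel. y \<in> {x} \<longrightarrow> std_normal_density y = 0"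
    using AE_not_in[OF n] by eventually_elim auto
  hence "{x} \<in> null_sets std_normal" unfolding std_normal_def
    by (subst null_sets_density_iff) auto
  then show ?thesis by (rule measure_eq_0_null_sets)
qed

lemma Phi_cont: "isCont Phi x"
proof -
  interpret N: real_distribution std_normal by (rule N_real_dist)
  show ?thesis unfolding Phi_cdf using N.isCont_cdf N_single by simp
qed

lemma Phi_cont_on: "continuous_on UNIV Phi"
  using Phi_cont by (simp add: continuous_at_imp_continuous_on)

lemma Phi_mono: "x \<le> y \<Longrightarrow> Phi x \<le> Phi y"
proof -
  assume "x \<le> y"
  interpret N: prob_space std_normal by (rule N_prob)
  show ?thesis unfolding Phi_def using \<open>x \<le> y\<close> by (intro N.finite_measure_mono) auto
qed

lemma Phi_measurable[measurable]: "Phi \<in> borel_measurable borel"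
  by (rule borel_measurable_mono) (auto simp: mono_def Phi_mono)

lemma Phi_bot: "(Phi \<longlongrightarrow> 0) at_bot"
proof -
  interpret N: real_distribution std_normal by (rule N_real_dist)
  show ?thesis unfolding Phi_cdf by (rule N.cdf_lim_at_bot)
qed

lemma Phi_top: "(Phi \<longlongrightarrow> 1) at_top"
proof -
  interpret N: real_distribution std_normal by (rule N_real_dist)
  show ?thesis unfolding Phi_cdf by (rule N.cdf_lim_at_top_prob)
qed

lemma closed_Phi_le: "closed {z. Phi z \<le> q}"
  by (rule closed_Collect_le[OF Phi_cont_on continuous_on_const])

lemma Phi_level:
  "{z. Phi z \<le> q} = {} \<or> {z. Phi z \<le> q} = UNIV \<or> (\<exists>m. {z. Phi z \<le> q} = {..m} \<and> Phi m = q)"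
proof -
  let ?S = "{z. Phi z \<le> q}"
  show ?thesis
  proof (cases "?S = {} \<or> ?S = UNIV")
    case True then show ?thesis by blast
  next
    case False
    then obtain z1 z0 where z1: "Phi z1 \<le> q" and z0: "\<not> Phi z0 \<le> q" by blast
    have bdd: "bdd_above ?S"
    proof (rule bdd_aboveI[of _ z0])
      fix z assume "z \<in> ?S"
      then show "z \<le> z0" using z0 Phi_mono[of z0 z] by force
    qed
    have ne: "?S \<noteq> {}" using z1 by blast
    define m where "m = Sup ?S"
    have mS: "m \<in> ?S" unfolding m_def by (rule closed_contains_Sup[OF ne bdd closed_Phi_le])
    have Seq: "?S = {..m}"
    proof
      show "?S \<subseteq> {..m}" using bdd by (auto simp: m_def intro: cSup_upper)
      show "{..m} \<subseteq> ?S" using mS Phi_mono by (auto intro: order_trans)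
    qed
    have lim: "(\<lambda>n. Phi (m + inverse (real (Suc n)))) \<longlonglongrightarrow> Phi m"
    proof -
      have "(\<lambda>n. m + inverse (real (Suc n))) \<longlonglongrightarrow> m + 0"
        by (intro tendsto_add tendsto_const LIMSEQ_inverse_real_of_nat)
      then show ?thesis by (intro isCont_tendsto_compose[OF Phi_cont]) simp
    qed
    have gt: "q \<le> Phi (m + inverse (real (Suc n)))" for n
    proof -
      have "m + inverse (real (Suc n)) \<notin> {..m}" by simp
      hence "m + inverse (real (Suc n)) \<notin> ?S" using Seq by blast
      then show ?thesis by simp
    qed
    have "q \<le> Phi m"
      by (rule tendsto_lowerbound[OF lim]) (use gt in auto)
    moreover have "Phi m \<le> q" using mS by simp
    ultimately have "Phi m = q" by simp
    then show ?thesis using Seq by blast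
  qed
qed

lemma Phi_measure_level:
  assumes "0 \<le> q" "q \<le> 1"
  shows "measure std_normal {z. Phi z \<le> q} = q"
proof -
  interpret N: prob_space std_normal by (rule N_prob)
  consider (E) "{z. Phi z \<le> q} = {}" | (U) "{z. Phi z \<le> q} = UNIV"
    | (M) m where "{z. Phi z \<le> q} = {..m}" "Phi m = q"
    using Phi_level[of q] by blast
  then show ?thesis
  proof cases
    case E
    have "q \<le> 0"
    proof (rule ccontr)
      assume "\<not> q \<le> 0"
      hence "eventually (\<lambda>z. Phi z < q) at_bot"
        using order_tendstoD(2)[OF Phi_bot] by simp
      then obtain z where "Phi z < q" using eventually_happens' by (metis eventually_at_bot_linorder order_refl)
      then show False using E by (metis (mono_tags) empty_iff less_imp_le mem_Collect_eq)
    qed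
    then show ?thesis using E assms by simp
  next
    case U
    have all: "\<forall>z. Phi z \<le> q" using U by auto
    have "1 \<le> q"
      by (rule tendsto_upperbound[OF Phi_top]) (use all in \<open>auto intro: always_eventually\<close>)
    then show ?thesis using U assms N.prob_space by simp
  next
    case M
    then show ?thesis by (simp add: Phi_def)
  qed
qed

lemma borel_Phi_le[measurable]: "{z. Phi z \<le> q} \<in> sets borel"
  by (rule borel_closed[OF closed_Phi_le])

lemma uniform_transfer:
  assumes P: "prob_space P" and X: "X \<in> borel_measurable P" and D: "distr P borel X = std_normal"
    and q: "0 \<le> q" "q \<le> 1"
  shows "measure P {x \<in> space P. Phi (X x) \<le> q} = q"
proof -
  have "measure P {x \<in> space P. Phi (X x) \<le> q} = measure P (X -` {z. Phi z \<le> q} \<inter> space P)"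
    by (rule arg_cong[where f="measure P"]) auto
  also have "\<dots> = measure (distr P borel X) {z. Phi z \<le> q}"
    by (rule measure_distr[symmetric, OF X borel_Phi_le])
  also have "\<dots> = q" unfolding D by (rule Phi_measure_level[OF q])
  finally show ?thesis .
qed



abbreviation M2 :: "(real \<times> real) measure" where "M2 \<equiv> std_normal \<Otimes>\<^sub>M std_normal"

lemma M2_prob: "prob_space M2"
  by (rule prob_space_pair[OF N_prob N_prob])

lemma space_M2[simp]: "space M2 = UNIV"
  by (simp add: space_pair_measure)

lemma sets_M2[measurable_cong]: "sets M2 = sets (borel \<Otimes>\<^sub>M borel)"
  by (rule sets_pair_measure_cong) simp_all

lemma distr_fst_N: "distr M2 borel fst = std_normal"
proof -
  have "distr M2 std_normal fst = std_normal" by (rule prob_space.distr_pair_fst[OF N_prob])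
  moreover have "distr M2 borel fst = distr M2 std_normal fst" by (rule distr_cong) simp_all
  ultimately show ?thesis by simp
qed

lemma distr_snd_N: "distr M2 borel snd = std_normal"
proof -
  interpret N: prob_space std_normal by (rule N_prob)

  have "distr M2 std_normal snd = std_normal"
  proof (intro measure_eqI)
    fix A assume A: "A \<in> sets (distr M2 std_normal snd)"
    from A have "emeasure (distr M2 std_normal snd) A = emeasure M2 (space std_normal \<times> A)"
      by (auto simp add: emeasure_distr space_pair_measure dest: sets.sets_into_space intro!: arg_cong2[where f=emeasure])
    moreover have "emeasure M2 (space std_normal \<times> A) = emeasure std_normal (space std_normal) * emeasure std_normal A"
      by (rule N.emeasure_pair_measure_Times) (use A in simp_all)
    ultimately show "emeasure (distr M2 std_normal snd) A = emeasure std_normal A"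
      using N.emeasure_space_1 by simp
  qed simp
  moreover have "distr M2 borel snd = distr M2 std_normal snd" by (rule distr_cong) simp_all
  ultimately show ?thesis by simp
qed

lemma indep_fst_snd: "prob_space.indep_var M2 borel fst borel snd"
proof -
  interpret P: prob_space M2 by (rule M2_prob)
  have "distr M2 (borel \<Otimes>\<^sub>M borel) (\<lambda>x. (fst x, snd x)) = distr M2 M2 (\<lambda>x. x)"
    by (rule distr_cong) (simp_all add: sets_M2)
  also have "\<dots> = M2" by simp
  finally have j: "distr M2 (borel \<Otimes>\<^sub>M borel) (\<lambda>x. (fst x, snd x)) = M2" .
  show ?thesis
    unfolding P.indep_var_distribution_eq distr_fst_N distr_snd_N j by simp
qed

lemma distributed_N_iff:
  assumes "X \<in> borel_measurable M2"
  shows "distributed M2 lborel X std_normal_density \<longleftrightarrow> distr M2 borel X = std_normal"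
proof -
  have "distr M2 lborel X = distr M2 borel X" by (rule distr_cong) simp_all
  then show ?thesis using assms unfolding distributed_def std_normal_def by simp
qed

definition W :: "real \<Rightarrow> real \<times> real \<Rightarrow> real" where
  "W \<rho> x = \<rho> * fst x + sqrt (1 - \<rho>\<^sup>2) * snd x"

lemma W_measurable[measurable]: "W \<rho> \<in> borel_measurable M2"
  unfolding W_def by measurable

lemma W_law:
  assumes r: "\<bar>\<rho>\<bar> \<le> 1"
  shows "distr M2 borel (W \<rho>) = std_normal"
proof -
  interpret P: prob_space M2 by (rule M2_prob)
  have dfst: "distributed M2 lborel fst std_normal_density"
    by (subst distributed_N_iff) (simp_all add: distr_fst_N)
  have dsnd: "distributed M2 lborel snd std_normal_density"
    by (subst distributed_N_iff) (simp_all add: distr_snd_N)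
  consider "\<rho> = 0" | "\<rho>\<^sup>2 = 1" | "\<rho> \<noteq> 0" "\<rho>\<^sup>2 \<noteq> 1" by blast
  then show ?thesis
  proof cases
    case 1
    then have "W \<rho> = snd" by (simp add: W_def fun_eq_iff)
    then show ?thesis by (simp add: distr_snd_N)
  next
    case 2
    then have "\<rho> = 1 \<or> \<rho> = -1" by (simp add: power2_eq_1_iff)
    then show ?thesis
    proof
      assume "\<rho> = 1"
      then have "W \<rho> = fst" by (simp add: W_def fun_eq_iff)
      then show ?thesis by (simp add: distr_fst_N)
    next
      assume m: "\<rho> = -1"
      have "distributed M2 lborel (\<lambda>x. 0 + (-1) * fst x) (normal_density (0 + (-1) * 0) (\<bar>-1\<bar> * 1))"
        by (rule P.normal_density_affine[OF dfst]) simp_all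
      moreover have "W \<rho> = (\<lambda>x. 0 + (-1) * fst x)" using m by (simp add: W_def fun_eq_iff)
      ultimately have "distributed M2 lborel (W \<rho>) std_normal_density" by simp
      then show ?thesis by (subst distributed_N_iff[symmetric]) simp_all
    qed
  next
    case 3
    define s where "s = sqrt (1 - \<rho>\<^sup>2)"
    have r2: "\<rho>\<^sup>2 < 1" using 3 r abs_square_le_1[of \<rho>] by linarith
    have sp: "0 < s" unfolding s_def using r2 by simp
    have rp: "0 < \<bar>\<rho>\<bar>" using 3 by simp
    have dX: "distributed M2 lborel (\<lambda>x. 0 + \<rho> * fst x) (normal_density (0 + \<rho> * 0) (\<bar>\<rho>\<bar> * 1))"
      by (rule P.normal_density_affine[OF dfst]) (use 3 in simp_all)
    have dY: "distributed M2 lborel (\<lambda>x. 0 + s * snd x) (normal_density (0 + s * 0) (\<bar>s\<bar> * 1))"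
      by (rule P.normal_density_affine[OF dsnd]) (use sp in simp_all)
    have ind: "P.indep_var borel ((\<lambda>u. 0 + \<rho> * u) \<circ> fst) borel ((\<lambda>v. 0 + s * v) \<circ> snd)"
      by (rule P.indep_var_compose[OF indep_fst_snd]) simp_all
    have "distributed M2 lborel (\<lambda>x. (0 + \<rho> * fst x) + (0 + s * snd x))
        (normal_density (0 + 0) (sqrt (\<bar>\<rho>\<bar>\<^sup>2 + s\<^sup>2)))"
      by (rule P.add_indep_normal) (use ind dX dY rp sp in \<open>simp_all add: comp_def\<close>)
    moreover have "sqrt (\<bar>\<rho>\<bar>\<^sup>2 + s\<^sup>2) = 1" unfolding s_def using r2 by simp
    moreover have "W \<rho> = (\<lambda>x. (0 + \<rho> * fst x) + (0 + s * snd x))"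
      by (simp add: W_def s_def fun_eq_iff)
    ultimately have "distributed M2 lborel (W \<rho>) std_normal_density" by simp
    then show ?thesis by (subst distributed_N_iff[symmetric]) simp_all
  qed
qed



lemma Gamma_alt: "Gamma \<rho> q1 q2 = measure M2 {x\<in>space M2. Phi (fst x) \<le> q1 \<and> Phi (W \<rho> x) \<le> q2}"
  unfolding Gamma_def W_def by (rule arg_cong[where f="measure M2"]) auto

lemma G_sets: "{x\<in>space M2. Phi (fst x) \<le> a \<and> Phi (W \<rho> x) \<le> b} \<in> sets M2"
  by measurable

lemma F1_sets: "{x\<in>space M2. Phi (fst x) \<le> a} \<in> sets M2"
  by measurable

lemma F2_sets: "{x\<in>space M2. Phi (W \<rho> x) \<le> b} \<in> sets M2"
  by measurable

lemma pm_diff_le: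
  assumes P: "prob_space P" and s: "A \<in> sets P" "B \<in> sets P" "C \<in> sets P" "D \<in> sets P"
    and sub: "A \<subseteq> B" "C \<subseteq> D" "B - A \<subseteq> D - C"
  shows "measure P B - measure P A \<le> measure P D - measure P C"
proof -
  interpret prob_space P by (rule P)
  have "measure P B - measure P A = measure P (B - A)" using s sub by (simp add: finite_measure_Diff)
  also have "\<dots> \<le> measure P (D - C)" using s sub by (intro finite_measure_mono) auto
  also have "\<dots> = measure P D - measure P C" using s sub by (simp add: finite_measure_Diff)
  finally show ?thesis .
qed

lemma Gamma_mono1: "q1 \<le> q1' \<Longrightarrow> Gamma \<rho> q1 q2 \<le> Gamma \<rho> q1' q2"
proof -
  assume "q1 \<le> q1'"
  interpret P: prob_space M2 by (rule M2_prob)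
  show ?thesis unfolding Gamma_alt using \<open>q1 \<le> q1'\<close>
    by (intro P.finite_measure_mono[OF _ G_sets]) auto
qed

lemma Gamma_mono2: "q2 \<le> q2' \<Longrightarrow> Gamma \<rho> q1 q2 \<le> Gamma \<rho> q1 q2'"
proof -
  assume "q2 \<le> q2'"
  interpret P: prob_space M2 by (rule M2_prob)
  show ?thesis unfolding Gamma_alt using \<open>q2 \<le> q2'\<close>
    by (intro P.finite_measure_mono[OF _ G_sets]) auto
qed

lemma Gamma_step1:
  assumes r: "\<bar>\<rho>\<bar> \<le> 1" and q: "0 \<le> q1" "q1 \<le> q1'" "q1' \<le> 1"
  shows "Gamma \<rho> q1' q2 - Gamma \<rho> q1 q2 \<le> q1' - q1"
proof -
  define F where "F q = {x\<in>space M2. Phi (fst x) \<le> q}" for q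
  have mF: "measure M2 (F q) = q" if "0 \<le> q" "q \<le> 1" for q
    unfolding F_def by (rule uniform_transfer[OF M2_prob _ distr_fst_N that]) simp
  have "Gamma \<rho> q1' q2 - Gamma \<rho> q1 q2 \<le> measure M2 (F q1') - measure M2 (F q1)"
    unfolding Gamma_alt F_def
    by (rule pm_diff_le[OF M2_prob G_sets G_sets F1_sets F1_sets]) (use q in auto)
  also have "\<dots> = q1' - q1" using q by (simp add: mF)
  finally show ?thesis .
qed

lemma Gamma_step2:
  assumes r: "\<bar>\<rho>\<bar> \<le> 1" and q: "0 \<le> q2" "q2 \<le> q2'" "q2' \<le> 1"
  shows "Gamma \<rho> q1 q2' - Gamma \<rho> q1 q2 \<le> q2' - q2"
proof -
  define F where "F q = {x\<in>space M2. Phi (W \<rho> x) \<le> q}" for q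
  have mF: "measure M2 (F q) = q" if "0 \<le> q" "q \<le> 1" for q
    unfolding F_def by (rule uniform_transfer[OF M2_prob _ W_law[OF r] that]) simp
  have "Gamma \<rho> q1 q2' - Gamma \<rho> q1 q2 \<le> measure M2 (F q2') - measure M2 (F q2)"
    unfolding Gamma_alt F_def
    by (rule pm_diff_le[OF M2_prob G_sets G_sets F2_sets F2_sets]) (use q in auto)
  also have "\<dots> = q2' - q2" using q by (simp add: mF)
  finally show ?thesis .
qed

lemma Gamma_lip1:
  assumes r: "\<bar>\<rho>\<bar> \<le> 1" and q: "0 \<le> q1" "q1 \<le> 1" "0 \<le> q1'" "q1' \<le> 1"
  shows "\<bar>Gamma \<rho> q1 q2 - Gamma \<rho> q1' q2\<bar> \<le> \<bar>q1 - q1'\<bar>"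
proof (cases "q1 \<le> q1'")
  case True
  then show ?thesis using Gamma_step1[OF r, of q1 q1' q2] Gamma_mono1[OF True, of \<rho> q2] q by auto
next
  case False
  then have F: "q1' \<le> q1" by simp
  then show ?thesis using Gamma_step1[OF r, of q1' q1 q2] Gamma_mono1[OF F, of \<rho> q2] q by auto
qed

lemma Gamma_lip2:
  assumes r: "\<bar>\<rho>\<bar> \<le> 1" and q: "0 \<le> q2" "q2 \<le> 1" "0 \<le> q2'" "q2' \<le> 1"
  shows "\<bar>Gamma \<rho> q1 q2 - Gamma \<rho> q1 q2'\<bar> \<le> \<bar>q2 - q2'\<bar>"
proof (cases "q2 \<le> q2'")
  case True
  then show ?thesis using Gamma_step2[OF r, of q2 q2' q1] Gamma_mono2[OF True, of \<rho> q1] q by auto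
next
  case False
  then have F: "q2' \<le> q2" by simp
  then show ?thesis using Gamma_step2[OF r, of q2' q2 q1] Gamma_mono2[OF F, of \<rho> q1] q by auto
qed

lemma Gamma_lip:
  assumes r: "\<bar>\<rho>\<bar> \<le> 1" and q: "0 \<le> q1" "q1 \<le> 1" "0 \<le> q1'" "q1' \<le> 1"
    "0 \<le> q2" "q2 \<le> 1" "0 \<le> q2'" "q2' \<le> 1"
  shows "\<bar>Gamma \<rho> q1 q2 - Gamma \<rho> q1' q2'\<bar> \<le> \<bar>q1 - q1'\<bar> + \<bar>q2 - q2'\<bar>"
  using Gamma_lip1[OF r q(1-4), of q2] Gamma_lip2[OF r q(5-8), of q1'] by linarith

lemma Gamma_nonneg: "0 \<le> Gamma \<rho> q1 q2"
  unfolding Gamma_def by simp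

lemma Gamma_le1: "Gamma \<rho> q1 q2 \<le> 1"
proof -
  interpret P: prob_space M2 by (rule M2_prob)
  show ?thesis unfolding Gamma_def by simp
qed



lemma N_density_le: "std_normal_density x \<le> 1 / 2"
proof -
  have s: "2 \<le> sqrt (2 * pi)" by (rule real_le_rsqrt) (use pi_ge_two in simp)
  have "1 / sqrt (2 * pi) \<le> 1 / 2" using s by (intro divide_left_mono) auto
  moreover have "exp (- x\<^sup>2 / 2) \<le> 1" by simp
  ultimately have "1 / sqrt (2 * pi) * exp (- x\<^sup>2 / 2) \<le> 1 / 2 * 1"
    by (intro mult_mono) auto
  then show ?thesis by (simp add: std_normal_density_def)
qed

lemma N_interval:
  assumes ab: "a \<le> b"
  shows "measure std_normal {a..b} \<le> (b - a) / 2"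
proof -
  have "emeasure std_normal {a..b} = (\<integral>\<^sup>+x. ennreal (std_normal_density x) * indicator {a..b} x \<partial>lborel)"
    unfolding std_normal_def by (rule emeasure_density) auto
  also have "\<dots> \<le> (\<integral>\<^sup>+x. ennreal (1/2) * indicator {a..b} x \<partial>lborel)"
    by (intro nn_integral_mono mult_right_mono[OF ennreal_leI[OF N_density_le]]) simp
  also have "\<dots> = ennreal (1/2) * emeasure lborel {a..b}"
    by (rule nn_integral_cmult_indicator) simp
  also have "\<dots> = ennreal (1/2) * ennreal (b - a)"
    using ab by (simp only: emeasure_lborel_Icc)
  also have "\<dots> = ennreal (1/2 * (b - a))" by (rule ennreal_mult''[symmetric]) (use ab in simp)
  also have "\<dots> = ennreal ((b - a) / 2)" by simp
  finally have le: "emeasure std_normal {a..b} \<le> ennreal ((b - a) / 2)" .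
  have "measure std_normal {a..b} = enn2real (emeasure std_normal {a..b})" by (simp add: measure_def)
  also have "\<dots> \<le> enn2real (ennreal ((b - a) / 2))" by (rule enn2real_mono[OF le]) simp
  also have "\<dots> = (b - a) / 2" using ab by simp
  finally show ?thesis .
qed

lemma N_tail:
  assumes e: "e > 0"
  shows "\<exists>K>0. measure std_normal {z. K < \<bar>z\<bar>} \<le> e"
proof -
  interpret N: prob_space std_normal by (rule N_prob)
  have l1: "((\<lambda>K. Phi (- K)) \<longlongrightarrow> 0) at_top"
    by (rule filterlim_compose[OF Phi_bot filterlim_uminus_at_bot_at_top])
  have ev1: "eventually (\<lambda>K. Phi (- K) < e / 2) at_top"
    using order_tendstoD(2)[OF l1, of "e/2"] e by simp
  have ev2: "eventually (\<lambda>K. 1 - e / 2 < Phi K) at_top"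
    using order_tendstoD(1)[OF Phi_top, of "1 - e/2"] e by simp
  have "eventually (\<lambda>K. Phi (- K) < e / 2 \<and> 1 - e / 2 < Phi K \<and> 0 < K) at_top"
    using ev1 ev2 eventually_gt_at_top[of 0] by eventually_elim auto
  then obtain K where K: "Phi (- K) < e / 2" "1 - e / 2 < Phi K" "0 < K"
    using eventually_happens' by (metis (no_types, lifting) eventually_at_top_linorder order_refl)
  have sub: "{z. K < \<bar>z\<bar>} \<subseteq> {..- K} \<union> (space std_normal - {..K})" by auto
  have "measure std_normal {z. K < \<bar>z\<bar>} \<le> measure std_normal ({..- K} \<union> (space std_normal - {..K}))"
    by (rule N.finite_measure_mono[OF sub]) simp
  also have "\<dots> \<le> measure std_normal {..- K} + measure std_normal (space std_normal - {..K})"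
    by (rule measure_Un_le) simp_all
  also have "\<dots> = Phi (- K) + (1 - Phi K)"
    using N.prob_compl[of "{..K}"] by (simp add: Phi_def)
  finally have "measure std_normal {z. K < \<bar>z\<bar>} \<le> Phi (- K) + (1 - Phi K)" .
  then show ?thesis using K by (intro exI[of _ K]) auto
qed

lemma transfer_M2:
  assumes X: "X \<in> borel_measurable M2" and D: "distr M2 borel X = std_normal" and S: "S \<in> sets borel"
  shows "measure M2 {x\<in>space M2. X x \<in> S} = measure std_normal S"
proof -
  have "measure M2 {x\<in>space M2. X x \<in> S} = measure M2 (X -` S \<inter> space M2)"
    by (rule arg_cong[where f="measure M2"]) auto
  also have "\<dots> = measure (distr M2 borel X) S" by (rule measure_distr[symmetric, OF X S])
  finally show ?thesis unfolding D .
qed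



lemma W_diff_bound:
  assumes K: "\<bar>fst x\<bar> \<le> K" "\<bar>snd x\<bar> \<le> K" and a: "\<bar>\<rho> - \<rho>0\<bar> \<le> c" and b: "\<bar>sqrt (1 - \<rho>\<^sup>2) - sqrt (1 - \<rho>0\<^sup>2)\<bar> \<le> c"
  shows "\<bar>W \<rho> x - W \<rho>0 x\<bar> \<le> 2 * c * K"
proof -
  have c0: "0 \<le> c" using a by linarith
  have e: "W \<rho> x - W \<rho>0 x = (\<rho> - \<rho>0) * fst x + (sqrt (1 - \<rho>\<^sup>2) - sqrt (1 - \<rho>0\<^sup>2)) * snd x"
    by (simp add: W_def algebra_simps)
  have 1: "\<bar>(\<rho> - \<rho>0) * fst x\<bar> \<le> c * K" unfolding abs_mult by (rule mult_mono) (use a K in auto)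
  have 2: "\<bar>(sqrt (1 - \<rho>\<^sup>2) - sqrt (1 - \<rho>0\<^sup>2)) * snd x\<bar> \<le> c * K"
    unfolding abs_mult by (rule mult_mono) (use b K in auto)
  have "\<bar>W \<rho> x - W \<rho>0 x\<bar> \<le> \<bar>(\<rho> - \<rho>0) * fst x\<bar> + \<bar>(sqrt (1 - \<rho>\<^sup>2) - sqrt (1 - \<rho>0\<^sup>2)) * snd x\<bar>"
    unfolding e by (rule abs_triangle_ineq)
  then show ?thesis using 1 2 by linarith
qed

lemma Gamma_cont:
  assumes r0: "\<bar>\<rho>0\<bar> \<le> 1" and e: "e > 0"
  shows "\<exists>d>0. \<forall>\<rho>. \<bar>\<rho>\<bar> \<le> 1 \<longrightarrow> \<bar>\<rho> - \<rho>0\<bar> < d \<longrightarrow>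
           (\<forall>q1 q2. \<bar>Gamma \<rho> q1 q2 - Gamma \<rho>0 q1 q2\<bar> \<le> e)"
proof -
  interpret P: prob_space M2 by (rule M2_prob)
  obtain K where K: "K > 0" "measure std_normal {z. K < \<bar>z\<bar>} \<le> e / 4"
    using N_tail[of "e/4"] e by auto
  define \<eta> where "\<eta> = e / 2"
  have \<eta>: "\<eta> > 0" using e by (simp add: \<eta>_def)
  define c where "c = \<eta> / (4 * K)"
  have c: "c > 0" using \<eta> K by (simp add: c_def)
  have "isCont (\<lambda>r. sqrt (1 - r\<^sup>2)) \<rho>0" by (intro continuous_intros)
  then obtain d1 where d1: "d1 > 0"
    "\<And>r. dist r \<rho>0 < d1 \<Longrightarrow> dist (sqrt (1 - r\<^sup>2)) (sqrt (1 - \<rho>0\<^sup>2)) < c"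
    using c unfolding continuous_at_eps_delta by metis
  define d where "d = min d1 c"
  have d: "d > 0" using d1 c by (simp add: d_def)
  show ?thesis
  proof (intro exI[of _ d] conjI allI impI d)
    fix \<rho> q1 q2 assume r: "\<bar>\<rho>\<bar> \<le> 1" and rd: "\<bar>\<rho> - \<rho>0\<bar> < d"
    have a: "\<bar>\<rho> - \<rho>0\<bar> \<le> c" using rd by (simp add: d_def)
    have b: "\<bar>sqrt (1 - \<rho>\<^sup>2) - sqrt (1 - \<rho>0\<^sup>2)\<bar> \<le> c"
      using d1(2)[of \<rho>] rd by (simp add: d_def dist_real_def)
    have close: "\<bar>W \<rho> x - W \<rho>0 x\<bar> < \<eta>" if "\<bar>fst x\<bar> \<le> K" "\<bar>snd x\<bar> \<le> K" for x
    proof -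
      have "\<bar>W \<rho> x - W \<rho>0 x\<bar> \<le> 2 * c * K" by (rule W_diff_bound[OF that a b])
      also have "2 * c * K = \<eta> / 2" using K by (simp add: c_def)
      finally show ?thesis using \<eta> by linarith
    qed
    define X where "X = {x\<in>space M2. Phi (fst x) \<le> q1 \<and> Phi (W \<rho> x) \<le> q2}"
    define Y where "Y = {x\<in>space M2. Phi (fst x) \<le> q1 \<and> Phi (W \<rho>0 x) \<le> q2}"
    have XY: "X \<in> sets M2" "Y \<in> sets M2" unfolding X_def Y_def by (rule G_sets)+
    have "\<bar>measure M2 X - measure M2 Y\<bar> \<le> e"
    proof -
      consider (E) "{z. Phi z \<le> q2} = {}" | (U) "{z. Phi z \<le> q2} = UNIV"
        | (M) m where "{z. Phi z \<le> q2} = {..m}"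
        using Phi_level[of q2] by blast
      then show ?thesis
      proof cases
        case E
        then have "X = Y" unfolding X_def Y_def by auto
        then show ?thesis using e by simp
      next
        case U
        then have "X = Y" unfolding X_def Y_def by auto
        then show ?thesis using e by simp
      next
        case M
        then have lev: "Phi z \<le> q2 \<longleftrightarrow> z \<le> m" for z by (metis atMost_iff mem_Collect_eq)
        define B1 where "B1 = {x\<in>space M2. W \<rho>0 x \<in> {m - \<eta>..m + \<eta>}}"
        define B2 where "B2 = {x\<in>space M2. fst x \<in> {z. K < \<bar>z\<bar>}}"
        define B3 where "B3 = {x\<in>space M2. snd x \<in> {z. K < \<bar>z\<bar>}}"
        have Bs: "B1 \<in> sets M2" "B2 \<in> sets M2" "B3 \<in> sets M2"
          unfolding B1_def B2_def B3_def by measurable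
        have m1: "measure M2 B1 \<le> \<eta>"
        proof -
          have "measure M2 B1 = measure std_normal {m - \<eta>..m + \<eta>}"
            unfolding B1_def by (rule transfer_M2[OF W_measurable W_law[OF r0]]) simp
          also have "\<dots> \<le> ((m + \<eta>) - (m - \<eta>)) / 2" by (rule N_interval) (use \<eta> in simp)
          finally show ?thesis by simp
        qed
        have m2: "measure M2 B2 \<le> e / 4"
        proof -
          have "measure M2 B2 = measure std_normal {z. K < \<bar>z\<bar>}"
            unfolding B2_def by (rule transfer_M2[OF _ distr_fst_N]) simp_all
          then show ?thesis using K by simp
        qed
        have m3: "measure M2 B3 \<le> e / 4"
        proof -
          have "measure M2 B3 = measure std_normal {z. K < \<bar>z\<bar>}"
            unfolding B3_def by (rule transfer_M2[OF _ distr_snd_N]) simp_all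
          then show ?thesis using K by simp
        qed
        define B where "B = B1 \<union> B2 \<union> B3"
        have Bset: "B \<in> sets M2" unfolding B_def using Bs by auto
        have mB: "measure M2 B \<le> e"
        proof -
          have "measure M2 B \<le> measure M2 (B1 \<union> B2) + measure M2 B3"
            unfolding B_def by (rule measure_Un_le) (use Bs in auto)
          also have "measure M2 (B1 \<union> B2) \<le> measure M2 B1 + measure M2 B2"
            by (rule measure_Un_le) (use Bs in auto)
          finally show ?thesis using m1 m2 m3 by (simp add: \<eta>_def)
        qed
        have sub1: "X \<subseteq> Y \<union> B"
        proof
          fix x assume x: "x \<in> X"
          show "x \<in> Y \<union> B"
          proof (cases "\<bar>fst x\<bar> \<le> K \<and> \<bar>snd x\<bar> \<le> K")
            case True
            have cl: "\<bar>W \<rho> x - W \<rho>0 x\<bar> < \<eta>" using close True by auto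
            have "W \<rho> x \<le> m" using x lev by (simp add: X_def)
            then have "W \<rho>0 x \<le> m \<or> W \<rho>0 x \<in> {m - \<eta>..m + \<eta>}" using cl by auto
            then show ?thesis using x lev by (auto simp: X_def Y_def B_def B1_def)
          next
            case False
            then show ?thesis by (auto simp: B_def B2_def B3_def)
          qed
        qed
        have sub2: "Y \<subseteq> X \<union> B"
        proof
          fix x assume x: "x \<in> Y"
          show "x \<in> X \<union> B"
          proof (cases "\<bar>fst x\<bar> \<le> K \<and> \<bar>snd x\<bar> \<le> K")
            case True
            have cl: "\<bar>W \<rho> x - W \<rho>0 x\<bar> < \<eta>" using close True by auto
            have "W \<rho>0 x \<le> m" using x lev by (simp add: Y_def)
            then have "W \<rho> x \<le> m \<or> W \<rho>0 x \<in> {m - \<eta>..m + \<eta>}" using cl by auto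
            then show ?thesis using x lev by (auto simp: X_def Y_def B_def B1_def)
          next
            case False
            then show ?thesis by (auto simp: B_def B2_def B3_def)
          qed
        qed
        have "measure M2 X \<le> measure M2 (Y \<union> B)" by (rule P.finite_measure_mono[OF sub1]) (use XY Bset in auto)
        also have "\<dots> \<le> measure M2 Y + measure M2 B" by (rule measure_Un_le) (use XY Bset in auto)
        finally have A1: "measure M2 X \<le> measure M2 Y + measure M2 B" .
        have "measure M2 Y \<le> measure M2 (X \<union> B)" by (rule P.finite_measure_mono[OF sub2]) (use XY Bset in auto)
        also have "\<dots> \<le> measure M2 X + measure M2 B" by (rule measure_Un_le) (use XY Bset in auto)
        finally have A2: "measure M2 Y \<le> measure M2 X + measure M2 B" .
        show ?thesis using A1 A2 mB by linarith
      qed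
    qed
    then show "\<bar>Gamma \<rho> q1 q2 - Gamma \<rho>0 q1 q2\<bar> \<le> e"
      unfolding Gamma_alt X_def Y_def .
  qed
qed



definition sP :: "real \<Rightarrow> real \<Rightarrow> real" where
  "sP ci cj = sqrt ((1 - ci\<^sup>2) * (1 - cj\<^sup>2))"

lemma sP_pos: "\<bar>ci\<bar> < 1 \<Longrightarrow> \<bar>cj\<bar> < 1 \<Longrightarrow> 0 < sP ci cj"
  unfolding sP_def using abs_square_less_1[of ci] abs_square_less_1[of cj]
  by (intro real_sqrt_gt_zero mult_pos_pos) auto

lemma rho_eq: "\<bar>ci\<bar> < 1 \<Longrightarrow> \<bar>cj\<bar> < 1 \<Longrightarrow> rho (ci, cj, c) = (c - ci * cj) / sP ci cj"
  using sP_pos[of ci cj] unfolding rho_def sP_def by auto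

lemma rho_le0: "\<bar>ci\<bar> < 1 \<Longrightarrow> \<bar>cj\<bar> < 1 \<Longrightarrow> c \<le> ci * cj \<Longrightarrow> rho (ci, cj, c) \<le> 0"
  using sP_pos[of ci cj] by (simp add: rho_eq divide_nonpos_pos)

lemma rho_ge:
  assumes i: "\<bar>ci\<bar> < 1" and j: "\<bar>cj\<bar> < 1" and c: "-1 + \<bar>ci + cj\<bar> \<le> c"
  shows "-1 \<le> rho (ci, cj, c)"
proof -
  define L where "L = 1 - \<bar>ci + cj\<bar> + ci * cj"
  have P: "(1 - ci\<^sup>2) * (1 - cj\<^sup>2) = (1 - ci) * (1 - cj) * ((1 + ci) * (1 + cj))"
    by (simp add: algebra_simps power2_eq_square)
  have i1: "0 < 1 - ci" "0 < 1 + ci" using i by auto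
  have j1: "0 < 1 - cj" "0 < 1 + cj" using j by auto
  have L0: "0 \<le> L" and L2: "L\<^sup>2 \<le> (1 - ci\<^sup>2) * (1 - cj\<^sup>2)"
  proof -
    have "(0 \<le> L) \<and> L\<^sup>2 \<le> (1 - ci\<^sup>2) * (1 - cj\<^sup>2)"
    proof (cases "0 \<le> ci + cj")
      case True
      then have Le: "L = (1 - ci) * (1 - cj)" by (simp add: L_def algebra_simps)
      have eq: "(1 - ci\<^sup>2) * (1 - cj\<^sup>2) - L\<^sup>2 = L * (2 * (ci + cj))"
        unfolding Le by (simp add: algebra_simps power2_eq_square)
      have l0: "0 \<le> L" unfolding Le using i1 j1 by simp
      have nn: "0 \<le> L * (2 * (ci + cj))" using l0 True by simp
      show ?thesis using eq nn l0 by linarith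
    next
      case False
      then have Le: "L = (1 + ci) * (1 + cj)" by (simp add: L_def algebra_simps)
      have eq: "(1 - ci\<^sup>2) * (1 - cj\<^sup>2) - L\<^sup>2 = L * (- 2 * (ci + cj))"
        unfolding Le by (simp add: algebra_simps power2_eq_square)
      have l0: "0 \<le> L" unfolding Le using i1 j1 by simp
      have nn: "0 \<le> L * (- 2 * (ci + cj))" using l0 False by simp
      show ?thesis using eq nn l0 by linarith
    qed
    then show "0 \<le> L" "L\<^sup>2 \<le> (1 - ci\<^sup>2) * (1 - cj\<^sup>2)" by auto
  qed
  have Ls: "L \<le> sP ci cj" unfolding sP_def by (rule real_le_rsqrt[OF L2])
  have sp: "0 < sP ci cj" by (rule sP_pos[OF i j])
  have "-(sP ci cj) \<le> c - ci * cj" using Ls c by (simp add: L_def)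
  then have "-1 \<le> (c - ci * cj) / sP ci cj" using sp by (simp add: le_divide_eq)
  then show ?thesis by (simp add: rho_eq[OF i j])
qed

definition pert :: "real \<Rightarrow> config \<Rightarrow> config" where
  "pert \<epsilon> \<theta> = (case \<theta> of (ci, cj, cij) \<Rightarrow> (ci, cj, cij + \<epsilon>))"

definition Qp :: "real \<Rightarrow> real \<Rightarrow> config \<Rightarrow> bool" where
  "Qp e \<epsilon> \<theta> = (is_config (pert \<epsilon> \<theta>) \<and> positive_config (pert \<epsilon> \<theta>) \<and>
     (case pert \<epsilon> \<theta> of (ci, cj, cij) \<Rightarrow> -1 + \<bar>ci + cj\<bar> < cij \<and> cij < 1 - \<bar>ci - cj\<bar>) \<and>
     \<bar>rho (pert \<epsilon> \<theta>)\<bar> \<le> 1 \<and> \<bar>rho \<theta>\<bar> \<le> 1 \<and>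
     (\<forall>q1 q2. \<bar>Gamma (rho (pert \<epsilon> \<theta>)) q1 q2 - Gamma (rho \<theta>) q1 q2\<bar> \<le> e))"

lemma good_pert:
  assumes g: "goodc \<theta>" and e: "e > 0"
  shows "\<exists>\<epsilon>0>0. \<forall>\<epsilon>. 0 < \<epsilon> \<and> \<epsilon> < \<epsilon>0 \<longrightarrow> Qp e \<epsilon> \<theta>"
proof -
  obtain ci cj cij where th: "\<theta> = (ci, cj, cij)" by (cases \<theta>) auto
  have i: "\<bar>ci\<bar> < 1" and j: "\<bar>cj\<bar> < 1" and c1: "-1 + \<bar>ci + cj\<bar> \<le> cij"
    and c2: "cij < 1 - \<bar>ci - cj\<bar>" and c3: "cij < ci * cj"
    using g by (auto simp: goodc_def th)
  have sp: "0 < sP ci cj" by (rule sP_pos[OF i j])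
  have r0: "\<bar>rho \<theta>\<bar> \<le> 1" using rho_ge[OF i j c1] rho_le0[OF i j] c3 by (simp add: th)
  obtain d where d: "d > 0" "\<And>\<rho>. \<bar>\<rho>\<bar> \<le> 1 \<Longrightarrow> \<bar>\<rho> - rho \<theta>\<bar> < d \<Longrightarrow>
        (\<forall>q1 q2. \<bar>Gamma \<rho> q1 q2 - Gamma (rho \<theta>) q1 q2\<bar> \<le> e)"
    using Gamma_cont[OF r0 e] by blast
  define \<epsilon>0 where "\<epsilon>0 = min (min (1 - \<bar>ci - cj\<bar> - cij) (ci * cj - cij)) (d * sP ci cj)"
  have \<epsilon>0: "\<epsilon>0 > 0" using c2 c3 d sp by (simp add: \<epsilon>0_def)
  show ?thesis
  proof (intro exI[of _ \<epsilon>0] conjI allI impI \<epsilon>0)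
    fix \<epsilon> assume \<epsilon>: "0 < \<epsilon> \<and> \<epsilon> < \<epsilon>0"
    have e1: "cij + \<epsilon> < 1 - \<bar>ci - cj\<bar>" and e2: "cij + \<epsilon> < ci * cj" and e3: "\<epsilon> < d * sP ci cj"
      using \<epsilon> by (auto simp: \<epsilon>0_def)
    have pe: "pert \<epsilon> \<theta> = (ci, cj, cij + \<epsilon>)" by (simp add: pert_def th)
    have lo: "-1 + \<bar>ci + cj\<bar> < cij + \<epsilon>" using c1 \<epsilon> by linarith
    have rl: "rho (ci, cj, cij + \<epsilon>) \<le> 0" using rho_le0[OF i j] e2 by simp
    have rg: "-1 \<le> rho (ci, cj, cij + \<epsilon>)" using rho_ge[OF i j] lo by simp
    have "rho (ci, cj, cij + \<epsilon>) - rho \<theta> = \<epsilon> / sP ci cj"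
      unfolding th rho_eq[OF i j] using sp by (simp add: field_simps)
    moreover have "\<epsilon> / sP ci cj < d" using e3 sp by (simp add: divide_less_eq)
    ultimately have "\<bar>rho (ci, cj, cij + \<epsilon>) - rho \<theta>\<bar> < d" using \<epsilon> sp by simp
    then have G: "\<forall>q1 q2. \<bar>Gamma (rho (ci, cj, cij + \<epsilon>)) q1 q2 - Gamma (rho \<theta>) q1 q2\<bar> \<le> e"
      using d(2)[of "rho (ci, cj, cij + \<epsilon>)"] rl rg by auto
    have abs_ci: "ci \<in> {-1..1}" "cj \<in> {-1..1}" using i j by auto
    have "\<bar>ci - cj\<bar> \<ge> 0" "\<bar>ci + cj\<bar> \<ge> 0" by auto
    then have cfg: "is_config (ci, cj, cij + \<epsilon>)"
      unfolding is_config_def using abs_ci lo e1 by auto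
    show "Qp e \<epsilon> \<theta>"
      unfolding Qp_def pe using cfg rl rg G lo e1 r0 by (auto simp: positive_config_def)
  qed
qed

lemma finite_min_ex:
  fixes Q :: "real \<Rightarrow> 'a \<Rightarrow> bool"
  assumes "finite S" "\<forall>\<theta>\<in>S. \<exists>\<epsilon>0>0. \<forall>\<epsilon>. 0 < \<epsilon> \<and> \<epsilon> < \<epsilon>0 \<longrightarrow> Q \<epsilon> \<theta>"
  shows "\<exists>\<epsilon>0>0. \<forall>\<theta>\<in>S. \<forall>\<epsilon>. 0 < \<epsilon> \<and> \<epsilon> < \<epsilon>0 \<longrightarrow> Q \<epsilon> \<theta>"
  using assms
proof (induction S rule: finite_induct)
  case empty
  then show ?case by (intro exI[of _ 1]) auto
next
  case (insert x F)
  then obtain a where a: "a > 0" "\<forall>\<theta>\<in>F. \<forall>\<epsilon>. 0 < \<epsilon> \<and> \<epsilon> < a \<longrightarrow> Q \<epsilon> \<theta>" by auto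
  obtain b where b: "b > 0" "\<forall>\<epsilon>. 0 < \<epsilon> \<and> \<epsilon> < b \<longrightarrow> Q \<epsilon> x" using insert.prems by auto
  show ?case using a b by (intro exI[of _ "min a b"]) auto
qed



definition sterm :: "(real \<Rightarrow> real) \<Rightarrow> config \<Rightarrow> real" where
  "sterm t \<theta> = (case \<theta> of (ci, cj, cij) \<Rightarrow>
      (1 - t ci) / 2 + (1 - t cj) / 2 - 2 * Gamma (rho \<theta>) ((1 - t ci) / 2) ((1 - t cj) / 2))"

lemma soundness_t_eq: "soundness_t D t = measure_pmf.expectation D (sterm t)"
  unfolding soundness_t_def sterm_def ..

lemma exp_le:
  fixes f g :: "'a \<Rightarrow> real"
  assumes fin: "finite (set_pmf D)" and le: "\<And>\<theta>. \<theta> \<in> set_pmf D \<Longrightarrow> f \<theta> \<le> g \<theta> + c"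
  shows "measure_pmf.expectation D f \<le> measure_pmf.expectation D g + c"
proof -
  have "measure_pmf.expectation D f \<le> measure_pmf.expectation D (\<lambda>\<theta>. g \<theta> + c)"
    by (rule integral_mono_AE) (auto intro!: integrable_measure_pmf_finite[OF fin] AE_pmfI le)
  also have "\<dots> = measure_pmf.expectation D g + measure_pmf.expectation D (\<lambda>_. c)"
    by (rule Bochner_Integration.integral_add) (auto intro!: integrable_measure_pmf_finite[OF fin])
  also have "measure_pmf.expectation D (\<lambda>_. c) = c" by simp
  finally show ?thesis .
qed

lemma biases_case_pert: "(case pert \<epsilon> \<theta> of (ci, cj, cij) \<Rightarrow> {ci, cj}) = (case \<theta> of (ci, cj, cij) \<Rightarrow> {ci, cj})"
  by (cases \<theta>) (simp add: pert_def)

lemma biases_pert: "biases (map_pmf (pert \<epsilon>) D) = biases D"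
  unfolding biases_def set_map_pmf image_image using biases_case_pert[of \<epsilon>]
  by (simp add: case_prod_beta)

lemma sound_bdd:
  assumes t: "\<forall>b\<in>B_star. t b \<in> {-1..1}"
  shows "soundness_t D_star t \<le> 2"
proof -
  have "measure_pmf.expectation D_star (sterm t) \<le> measure_pmf.expectation D_star (\<lambda>_. 0) + 2"
  proof (rule exp_le[OF Dstar_finite])
    fix \<theta> assume th: "\<theta> \<in> set_pmf D_star"
    obtain ci cj cij where e: "\<theta> = (ci, cj, cij)" by (cases \<theta>) auto
    have "ci \<in> B_star" "cj \<in> B_star" using Dstar_biases[OF th] by (simp_all add: e)
    then have "t ci \<ge> -1" "t cj \<ge> -1" using t by auto
    then have q: "(1 - t ci) / 2 \<le> 1" "(1 - t cj) / 2 \<le> 1" by simp_all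
    define G where "G = Gamma (rho (ci, cj, cij)) ((1 - t ci) / 2) ((1 - t cj) / 2)"
    have g: "0 \<le> G" unfolding G_def by (rule Gamma_nonneg)
    have "sterm t \<theta> = (1 - t ci) / 2 + (1 - t cj) / 2 - 2 * G"
      by (simp add: sterm_def e G_def)
    then show "sterm t \<theta> \<le> 0 + 2" using q g by linarith
  qed
  then show ?thesis unfolding soundness_t_eq by simp
qed

lemma main_delta:
  assumes d: "0 < \<delta>" "\<delta> < 0.01"
  shows "\<exists>D' \<mu>'. positive_blueprint D' B_star \<mu>' \<and>
       completeness D' \<ge> completeness D_star - 50 * \<delta> \<and>
       soundness D' B_star \<mu>' \<le> soundness D_star B_star mu_star + 50 * \<delta> \<and>
       (\<forall>(ci, cj, cij)\<in>set_pmf D'. -1 + \<bar>ci + cj\<bar> < cij \<and> cij < 1 - \<bar>ci - cj\<bar>) \<and>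
       (\<forall>b\<in>B_star. pmf \<mu>' b \<ge> \<delta>)"
proof -
  have e2: "\<delta> / 2 > 0" using d by simp
  obtain \<epsilon>0 where \<epsilon>0: "\<epsilon>0 > 0" "\<forall>\<theta>\<in>set_pmf D_star. \<forall>\<epsilon>. 0 < \<epsilon> \<and> \<epsilon> < \<epsilon>0 \<longrightarrow> Qp (\<delta> / 2) \<epsilon> \<theta>"
    using finite_min_ex[OF Dstar_finite, of "\<lambda>\<epsilon> \<theta>. Qp (\<delta> / 2) \<epsilon> \<theta>"]
      good_pert[OF Dstar_good e2] by blast
  define \<epsilon> where "\<epsilon> = min (\<epsilon>0 / 2) \<delta>"
  have \<epsilon>: "0 < \<epsilon>" "\<epsilon> < \<epsilon>0" "\<epsilon> \<le> \<delta>" using \<epsilon>0 d by (auto simp: \<epsilon>_def)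
  have Q: "\<And>\<theta>. \<theta> \<in> set_pmf D_star \<Longrightarrow> Qp (\<delta> / 2) \<epsilon> \<theta>" using \<epsilon>0 \<epsilon> by blast
  define D' where "D' = map_pmf (pert \<epsilon>) D_star"
  have setD': "set_pmf D' = pert \<epsilon> ` set_pmf D_star" by (simp add: D'_def)
  have finD': "finite (set_pmf D')" using Dstar_finite by (simp add: setD')
  have pf: "\<delta> \<le> p1 \<delta>" "\<delta> \<le> p4 \<delta>" "p1 \<delta> + p4 \<delta> + 3 * \<delta> = 1"
    "p1 \<delta> * b1 + p4 \<delta> * b4 + \<delta> * (b2 + b3 + b5) = 0" by (rule p_facts[OF d])+
  have PB: "positive_blueprint D' B_star (mup \<delta>)"
  proof -
    have "\<forall>\<theta>\<in>set_pmf D'. is_config \<theta> \<and> positive_config \<theta>"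
      using Q by (auto simp: setD' Qp_def)
    moreover have "B_star = biases D'" by (simp add: D'_def biases_pert biases_Dstar)
    moreover have "(\<Sum>b\<in>B_star. pmf (mup \<delta>) b * b) = 0"
      using sum_mup[OF d, of "\<lambda>b. b"] pf(4) by (simp add: algebra_simps)
    ultimately show ?thesis
      unfolding positive_blueprint_def is_blueprint_def using finD' set_mup[OF d] by auto
  qed
  have CP: "completeness D' \<ge> completeness D_star - 50 * \<delta>"
  proof -
    let ?f = "\<lambda>(ci::real, cj::real, cij::real). (1 - cij) / 2"
    have "measure_pmf.expectation D_star ?f \<le> measure_pmf.expectation D_star (\<lambda>\<theta>. ?f (pert \<epsilon> \<theta>)) + \<epsilon> / 2"
    proof (rule exp_le[OF Dstar_finite])
      fix \<theta> :: config
      show "?f \<theta> \<le> ?f (pert \<epsilon> \<theta>) + \<epsilon> / 2" by (cases \<theta>) (auto simp: pert_def field_simps)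
    qed
    moreover have "completeness D' = measure_pmf.expectation D_star (\<lambda>\<theta>. ?f (pert \<epsilon> \<theta>))"
      unfolding completeness_def D'_def by simp
    ultimately show ?thesis using \<epsilon> d unfolding completeness_def by linarith
  qed
  define Sd where "Sd = {soundness_t D' t |t. (\<forall>b\<in>B_star. t b \<in> {-1..1}) \<and> (\<Sum>b\<in>B_star. pmf (mup \<delta>) b * t b) = 0}"
  define Ss where "Ss = {soundness_t D_star t |t. (\<forall>b\<in>B_star. t b \<in> {-1..1}) \<and> (\<Sum>b\<in>B_star. pmf mu_star b * t b) = 0}"
  have bddS: "bdd_above Ss" unfolding Ss_def using sound_bdd by (auto intro!: bdd_aboveI[of _ 2])
  have SD: "soundness D' B_star (mup \<delta>) \<le> soundness D_star B_star mu_star + 50 * \<delta>"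
  proof -
    have ne: "Sd \<noteq> {}" unfolding Sd_def by (auto intro!: exI[of _ "\<lambda>_. 0"])
    have "Sup Sd \<le> Sup Ss + 50 * \<delta>"
    proof (rule cSup_least[OF ne])
      fix x assume "x \<in> Sd"
      then obtain t where x: "x = soundness_t D' t" and t: "\<forall>b\<in>B_star. t b \<in> {-1..1}"
        and tc: "(\<Sum>b\<in>B_star. pmf (mup \<delta>) b * t b) = 0" unfolding Sd_def by auto
      define a where "a = mu1 * t b1 + mu4 * t b4"
      have ab: "\<bar>a\<bar> \<le> 7 * \<delta>" unfolding a_def by (rule a_bound[OF d t tc])
      define t' where "t' b = (t b - a) / (1 + \<bar>a\<bar>)" for b
      have den: "0 < 1 + \<bar>a\<bar>" by simp
      have t'r: "t' b \<in> {-1..1}" if "b \<in> B_star" for b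
      proof -
        have "\<bar>t b\<bar> \<le> 1" using t that by auto
        then have "\<bar>t b - a\<bar> \<le> 1 + \<bar>a\<bar>" by linarith
        then have "\<bar>t' b\<bar> \<le> 1" using den by (simp add: t'_def abs_divide divide_le_eq)
        then show ?thesis by auto
      qed
      have t'c: "(\<Sum>b\<in>B_star. pmf mu_star b * t' b) = 0"
      proof -
        have "mu1 * t' b1 + mu4 * t' b4 = (mu1 * (t b1 - a) + mu4 * (t b4 - a)) / (1 + \<bar>a\<bar>)"
          unfolding t'_def by (simp only: times_divide_eq_right add_divide_distrib)
        also have "mu1 * (t b1 - a) + mu4 * (t b4 - a) = (mu1 * t b1 + mu4 * t b4) - (mu1 + mu4) * a"
          by (simp add: algebra_simps)
        also have "\<dots> = 0" using mu_facts(1) by (simp add: a_def)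
        finally have "mu1 * t' b1 + mu4 * t' b4 = 0" by simp
        then show ?thesis by (simp add: sum_mu_star)
      qed
      have tt': "\<bar>t b - t' b\<bar> \<le> 14 * \<delta>" if "b \<in> B_star" for b
      proof -
        have tb: "\<bar>t b\<bar> \<le> 1" using t that by auto
        have "t b - t' b = (t b * \<bar>a\<bar> + a) / (1 + \<bar>a\<bar>)"
          unfolding t'_def using den by (simp add: field_simps)
        also have "\<bar>\<dots>\<bar> \<le> \<bar>t b * \<bar>a\<bar> + a\<bar>"
        proof -
          have "\<bar>(t b * \<bar>a\<bar> + a) / (1 + \<bar>a\<bar>)\<bar> = \<bar>t b * \<bar>a\<bar> + a\<bar> / (1 + \<bar>a\<bar>)"
            using den by (simp add: abs_divide)
          also have "\<dots> \<le> \<bar>t b * \<bar>a\<bar> + a\<bar> / 1" by (rule divide_left_mono) auto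
          finally show ?thesis by simp
        qed
        also have "\<dots> \<le> \<bar>t b\<bar> * \<bar>a\<bar> + \<bar>a\<bar>" by (metis abs_abs abs_mult abs_triangle_ineq)
        also have "\<dots> \<le> 1 * \<bar>a\<bar> + \<bar>a\<bar>" using tb by (intro add_right_mono mult_right_mono) auto
        finally show ?thesis using ab by linarith
      qed
      have feas: "soundness_t D_star t' \<in> Ss" unfolding Ss_def using t'r t'c by auto
      have "x \<le> soundness_t D_star t' + 43 * \<delta>"
      proof -
        have "measure_pmf.expectation D_star (\<lambda>\<theta>. sterm t (pert \<epsilon> \<theta>))
              \<le> measure_pmf.expectation D_star (sterm t') + 43 * \<delta>"
        proof (rule exp_le[OF Dstar_finite])
          fix \<theta> assume th: "\<theta> \<in> set_pmf D_star"
          obtain ci cj cij where e: "\<theta> = (ci, cj, cij)" by (cases \<theta>) auto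
          have Bs: "ci \<in> B_star" "cj \<in> B_star" using Dstar_biases[OF th] by (simp_all add: e)
          have Qt: "Qp (\<delta> / 2) \<epsilon> \<theta>" by (rule Q[OF th])
          define \<rho> where "\<rho> = rho \<theta>"
          define \<rho>' where "\<rho>' = rho (ci, cj, cij + \<epsilon>)"
          have pe: "pert \<epsilon> \<theta> = (ci, cj, cij + \<epsilon>)" by (simp add: pert_def e)
          have r: "\<bar>\<rho>\<bar> \<le> 1" using Qt by (simp add: Qp_def \<rho>_def)
          have G: "\<And>q1 q2. \<bar>Gamma \<rho>' q1 q2 - Gamma \<rho> q1 q2\<bar> \<le> \<delta> / 2"
            using Qt by (simp add: Qp_def pe \<rho>_def \<rho>'_def)
          define qi where "qi = (1 - t ci) / 2"
          define qj where "qj = (1 - t cj) / 2"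
          define qi' where "qi' = (1 - t' ci) / 2"
          define qj' where "qj' = (1 - t' cj) / 2"
          have qr: "0 \<le> qi" "qi \<le> 1" "0 \<le> qj" "qj \<le> 1" "0 \<le> qi'" "qi' \<le> 1" "0 \<le> qj'" "qj' \<le> 1"
            using t Bs t'r[of ci] t'r[of cj] by (auto simp: qi_def qj_def qi'_def qj'_def)
          have dqi: "\<bar>qi - qi'\<bar> \<le> 7 * \<delta>"
          proof -
            have e1: "qi - qi' = (t' ci - t ci) / 2" by (simp add: qi_def qi'_def field_simps)
            have h: "\<bar>t' ci - t ci\<bar> \<le> 14 * \<delta>" using tt'[OF Bs(1)] by (simp add: abs_minus_commute)
            have eq: "\<bar>qi - qi'\<bar> = \<bar>t' ci - t ci\<bar> / 2" by (simp add: e1 abs_divide)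
            have "\<bar>t' ci - t ci\<bar> / 2 \<le> (14 * \<delta>) / 2" by (rule divide_right_mono[OF h]) simp
            then show ?thesis unfolding eq by simp
          qed
          have dqj: "\<bar>qj - qj'\<bar> \<le> 7 * \<delta>"
          proof -
            have e1: "qj - qj' = (t' cj - t cj) / 2" by (simp add: qj_def qj'_def field_simps)
            have h: "\<bar>t' cj - t cj\<bar> \<le> 14 * \<delta>" using tt'[OF Bs(2)] by (simp add: abs_minus_commute)
            have eq: "\<bar>qj - qj'\<bar> = \<bar>t' cj - t cj\<bar> / 2" by (simp add: e1 abs_divide)
            have "\<bar>t' cj - t cj\<bar> / 2 \<le> (14 * \<delta>) / 2" by (rule divide_right_mono[OF h]) simp
            then show ?thesis unfolding eq by simp
          qed
          have L: "\<bar>Gamma \<rho> qi qj - Gamma \<rho> qi' qj'\<bar> \<le> \<bar>qi - qi'\<bar> + \<bar>qj - qj'\<bar>"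
            by (rule Gamma_lip[OF r qr(1,2,5,6,3,4,7,8)])
          have s1: "sterm t (pert \<epsilon> \<theta>) = qi + qj - 2 * Gamma \<rho>' qi qj"
            unfolding sterm_def pe qi_def qj_def \<rho>'_def by simp
          have s2: "sterm t' \<theta> = qi' + qj' - 2 * Gamma \<rho> qi' qj'"
            unfolding sterm_def e qi'_def qj'_def \<rho>_def by (simp add: e)
          have "\<bar>Gamma \<rho>' qi qj - Gamma \<rho> qi qj\<bar> \<le> \<delta> / 2" by (rule G)
          then show "sterm t (pert \<epsilon> \<theta>) \<le> sterm t' \<theta> + 43 * \<delta>"
            unfolding s1 s2 using L dqi dqj by linarith
        qed
        moreover have "x = measure_pmf.expectation D_star (\<lambda>\<theta>. sterm t (pert \<epsilon> \<theta>))"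
          unfolding x soundness_t_eq D'_def by simp
        ultimately show ?thesis unfolding soundness_t_eq by simp
      qed
      moreover have "soundness_t D_star t' \<le> Sup Ss" by (rule cSup_upper[OF feas bddS])
      ultimately show "x \<le> Sup Ss + 50 * \<delta>" using d by linarith
    qed
    then show ?thesis unfolding soundness_def Sd_def[symmetric] Ss_def[symmetric] .
  qed
  have ST: "\<forall>(ci, cj, cij)\<in>set_pmf D'. -1 + \<bar>ci + cj\<bar> < cij \<and> cij < 1 - \<bar>ci - cj\<bar>"
    using Q by (auto simp: setD' Qp_def split: prod.splits)
  have MU: "\<forall>b\<in>B_star. pmf (mup \<delta>) b \<ge> \<delta>"
    using pf d by (auto simp: B_star_def pmf_mup[OF d])
  show ?thesis using PB CP SD ST MU by blast
qed

theorem lemma3p4: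
  shows "\<exists>\<delta>0 > 0. \<exists>C > 0. \<forall>\<delta>::real. 0 < \<delta> \<and> \<delta> < \<delta>0 \<longrightarrow>
    (\<exists>D' \<mu>'. positive_blueprint D' B_star \<mu>' \<and>
       completeness D' \<ge> completeness D_star - C * \<delta> \<and>
       soundness D' B_star \<mu>' \<le> soundness D_star B_star mu_star + C * \<delta> \<and>
       (\<forall>(ci, cj, cij)\<in>set_pmf D'. -1 + \<bar>ci + cj\<bar> < cij \<and> cij < 1 - \<bar>ci - cj\<bar>) \<and>
       (\<forall>b\<in>B_star. pmf \<mu>' b \<ge> \<delta>))"
  apply (rule exI[of _ "0.01"])
  apply (rule conjI)
   apply simp
  apply (rule exI[of _ 50])
  apply (rule conjI)
   apply simp
  using main_delta by blast

end
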